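(* Let $\mathcal P$ and $\mathrm{conv}(\mathcal P)$ be as in the context. Let $k\in[1,T-1]_{\mathbb Z}$ with $\overline C-\underline C-kV>0$, $m\in[0,k-1]_{\mathbb Z}$, and $\mathcal S\subseteq[0,\min\{k-1,L-m-2\}]_{\mathbb Z}$. For any $t\in[k+1,T-m-1]_{\mathbb Z}$, the inequality $$x_t-x_{t-k}\le(\underline C+(k-m)V-\overline V)y_{t+m+1}+V\sum_{i=1}^m y_{t+i}+\overline V y_t-\underline C y_{t-k}-\sum_{s\in\mathcal S}(\underline C+(k-s)V-\overline V)(y_{t-s}-y_{t-s-1})$$ is valid and facet-defining for $\mathrm{conv}(\mathcal P)$. For any $t\in[m+2,T-k]_{\mathbb Z}$, the inequality $$x_t-x_{t+k}\le(\underline C+(k-m)V-\overline V)y_{t-m-1}+V\sum_{i=1}^m y_{t-i}+\overline V y_t-\underline C y_{t+k}-\sum_{s\in\mathcal S}(\underline C+(k-s)V-\overline V)(y_{t+s}-y_{t+s+1})$$ is valid and facet-defining for $\mathrm{conv}(\mathcal P)$.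
   Context: For integers $a,b$, $[a,b]_{\mathbb Z}=\{a,a+1,\dots,b\}$ if $a\le b$ and $\emptyset$ otherwise. Fix a positive integer $T$, positive integers $L$ (minimum up time) and $\ell$ (minimum down time), and reals $\overline C,\underline C,V,\overline V$ with $\overline C>\underline C>0$, $V>0$, $\overline V+V\le\overline C$ and $\underline C<\overline V<\underline C+V$. $\mathcal P$ is the set of $(\mathbf x,\mathbf y)=((x_1,\dots,x_T),(y_1,\dots,y_T))\in\mathbb R_+^T\times\{0,1\}^T$ satisfying: (i) $-y_{t-1}+y_t-y_k\le 0$ for all $t\in[2,T]_{\mathbb Z}$, $k\in[t,\min\{T,t+L-1\}]_{\mathbb Z}$; (ii) $y_{t-1}-y_t+y_k\le 1$ for all $t\in[2,T]_{\mathbb Z}$, $k\in[t,\min\{T,t+\ell-1\}]_{\mathbb Z}$; (iii) $-x_t+\underline C y_t\le 0$ and $x_t-\overline C y_t\le 0$ for all $t\in[1,T]_{\mathbb Z}$; (iv) $x_t-x_{t-1}\le Vy_{t-1}+\overline V(1-y_{t-1})$ for all $t\in[2,T]_{\mathbb Z}$; (v) $x_{t-1}-x_t\le Vy_t+\overline V(1-y_t)$ for all $t\in[2,T]_{\mathbb Z}$. $\mathrm{conv}(\mathcal P)\subseteq\mathbb R^{2T}$ is its convex hull. A linear inequality is valid for $\mathrm{conv}(\mathcal P)$ if all its points satisfy it, and facet-defining if moreover the set of points of $\mathrm{conv}(\mathcal P)$ satisfying it with equality has dimension $\dim\mathrm{conv}(\mathcal P)-1$. *)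

theory Defs
  imports "HOL-Analysis.Analysis"
begin

text \<open>Points of R^(2T) are pairs (x, y) of vectors in real^'n with T = CARD('n);
  the coordinates are numbered 1..T via a bijection ix from {1..T} onto the index type.\<close>

definition xc :: "(nat \<Rightarrow> 'n::finite) \<Rightarrow> (real^'n) \<times> (real^'n) \<Rightarrow> nat \<Rightarrow> real" where
  "xc ix p t = fst p $ ix t"

definition yc :: "(nat \<Rightarrow> 'n::finite) \<Rightarrow> (real^'n) \<times> (real^'n) \<Rightarrow> nat \<Rightarrow> real" where
  "yc ix p t = snd p $ ix t"

text \<open>The set P (unit commitment polytope points) with minimum up time L, minimum down time l,
  capacities Cb (upper) and Cu (lower), ramping V, start-up/shut-down ramping Vb.\<close>

definition UCP :: "(nat \<Rightarrow> 'n::finite) \<Rightarrow> nat \<Rightarrow> nat \<Rightarrow> real \<Rightarrow> real \<Rightarrow> real \<Rightarrow> real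
    \<Rightarrow> ((real^'n) \<times> (real^'n)) set" where
  "UCP ix L l Cb Cu V Vb = {p.
     (let T = CARD('n); x = xc ix p; y = yc ix p in
       (\<forall>t\<in>{1..T}. x t \<ge> 0 \<and> y t \<in> {0, 1}) \<and>
       (\<forall>t\<in>{2..T}. \<forall>k\<in>{t..T}. k \<le> t + L - 1 \<longrightarrow> - y (t - 1) + y t - y k \<le> 0) \<and>
       (\<forall>t\<in>{2..T}. \<forall>k\<in>{t..T}. k \<le> t + l - 1 \<longrightarrow> y (t - 1) - y t + y k \<le> 1) \<and>
       (\<forall>t\<in>{1..T}. - x t + Cu * y t \<le> 0 \<and> x t - Cb * y t \<le> 0) \<and>
       (\<forall>t\<in>{2..T}. x t - x (t - 1) \<le> V * y (t - 1) + Vb * (1 - y (t - 1))) \<and>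
       (\<forall>t\<in>{2..T}. x (t - 1) - x t \<le> V * y t + Vb * (1 - y t)))}"

definition valid_facet :: "('a::euclidean_space) set \<Rightarrow> ('a \<Rightarrow> real) \<Rightarrow> ('a \<Rightarrow> real) \<Rightarrow> bool" where
  "valid_facet K a b \<longleftrightarrow> (\<forall>p\<in>K. a p \<le> b p) \<and> aff_dim {p\<in>K. a p = b p} = aff_dim K - 1"

end

theory Submission
  imports Defs
begin


definition ucpc :: "nat \<Rightarrow> nat \<Rightarrow> nat \<Rightarrow> real \<Rightarrow> real \<Rightarrow> real \<Rightarrow> real \<Rightarrow> (nat\<Rightarrow>real) \<Rightarrow> (nat\<Rightarrow>real) \<Rightarrow> bool" where
 "ucpc T L l Cb Cu V Vb x y \<longleftrightarrow>
       (\<forall>t\<in>{1..T}. x t \<ge> 0 \<and> y t \<in> {0, 1}) \<and>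
       (\<forall>t\<in>{2..T}. \<forall>k\<in>{t..T}. k \<le> t + L - 1 \<longrightarrow> - y (t - 1) + y t - y k \<le> 0) \<and>
       (\<forall>t\<in>{2..T}. \<forall>k\<in>{t..T}. k \<le> t + l - 1 \<longrightarrow> y (t - 1) - y t + y k \<le> 1) \<and>
       (\<forall>t\<in>{1..T}. - x t + Cu * y t \<le> 0 \<and> x t - Cb * y t \<le> 0) \<and>
       (\<forall>t\<in>{2..T}. x t - x (t - 1) \<le> V * y (t - 1) + Vb * (1 - y (t - 1))) \<and>
       (\<forall>t\<in>{2..T}. x (t - 1) - x t \<le> V * y t + Vb * (1 - y t))"

lemma UCP_ucpc: "p \<in> UCP ix L l Cb Cu V Vb \<Longrightarrow> ucpc CARD('n) L l Cb Cu V Vb (xc ix p) (yc ix p)"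
  for ix :: "nat \<Rightarrow> 'n::finite"
  unfolding UCP_def ucpc_def Let_def by simp

definition rhs1 :: "real \<Rightarrow> real \<Rightarrow> real \<Rightarrow> nat \<Rightarrow> nat \<Rightarrow> nat set \<Rightarrow> nat \<Rightarrow> (nat \<Rightarrow> real) \<Rightarrow> real" where
 "rhs1 Cu V Vb k m S t y = (Cu + real (k - m) * V - Vb) * y (t + m + 1)
               + V * (\<Sum>i=1..m. y (t + i)) + Vb * y t - Cu * y (t - k)
               - (\<Sum>s\<in>S. (Cu + real (k - s) * V - Vb) * (y (t - s) - y (t - s - 1)))"

definition rhs2 :: "real \<Rightarrow> real \<Rightarrow> real \<Rightarrow> nat \<Rightarrow> nat \<Rightarrow> nat set \<Rightarrow> nat \<Rightarrow> (nat \<Rightarrow> real) \<Rightarrow> real" where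
 "rhs2 Cu V Vb k m S t y = (Cu + real (k - m) * V - Vb) * y (t - m - 1)
               + V * (\<Sum>i=1..m. y (t - i)) + Vb * y t - Cu * y (t + k)
               - (\<Sum>s\<in>S. (Cu + real (k - s) * V - Vb) * (y (t + s) - y (t + s + 1)))"

locale ucb =
  fixes T L l :: nat and Cb Cu V Vb :: real and x y :: "nat \<Rightarrow> real"
  assumes uc: "ucpc T L l Cb Cu V Vb x y"
begin

lemma c1: "\<forall>t\<in>{1..T}. x t \<ge> 0 \<and> y t \<in> {0, 1}" using uc unfolding ucpc_def by blast
lemma c2: "\<forall>t\<in>{2..T}. \<forall>k\<in>{t..T}. k \<le> t + L - 1 \<longrightarrow> - y (t - 1) + y t - y k \<le> 0" using uc unfolding ucpc_def by blast
lemma c4: "\<forall>t\<in>{1..T}. - x t + Cu * y t \<le> 0 \<and> x t - Cb * y t \<le> 0" using uc unfolding ucpc_def by blast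
lemma c5: "\<forall>t\<in>{2..T}. x t - x (t - 1) \<le> V * y (t - 1) + Vb * (1 - y (t - 1))" using uc unfolding ucpc_def by blast
lemma c6: "\<forall>t\<in>{2..T}. x (t - 1) - x t \<le> V * y t + Vb * (1 - y t)" using uc unfolding ucpc_def by blast

lemma y01: "i \<in> {1..T} \<Longrightarrow> y i = 0 \<or> y i = 1"
  using c1 by auto

lemma x0: "i \<in> {1..T} \<Longrightarrow> y i = 0 \<Longrightarrow> x i = 0"
proof -
  assume a: "i \<in> {1..T}" "y i = 0"
  have "x i \<le> 0" using bspec[OF c4 a(1)] a(2) by simp
  moreover have "x i \<ge> 0" using bspec[OF c1 a(1)] by simp
  ultimately show ?thesis by simp
qed

lemma x1: "i \<in> {1..T} \<Longrightarrow> y i = 1 \<Longrightarrow> Cu \<le> x i \<and> x i \<le> Cb"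
  using c4 by fastforce

lemma up1: "i \<in> {2..T} \<Longrightarrow> y (i-1) = 1 \<Longrightarrow> x i - x (i-1) \<le> V"
  using c5 by fastforce
lemma up0: "i \<in> {2..T} \<Longrightarrow> y (i-1) = 0 \<Longrightarrow> x i - x (i-1) \<le> Vb"
  using c5 by fastforce
lemma dn1: "i \<in> {2..T} \<Longrightarrow> y i = 1 \<Longrightarrow> x (i-1) - x i \<le> V"
  using c6 by fastforce
lemma dn0: "i \<in> {2..T} \<Longrightarrow> y i = 0 \<Longrightarrow> x (i-1) - x i \<le> Vb"
  using c6 by fastforce

lemma minup: "i \<in> {2..T} \<Longrightarrow> y (i-1) = 0 \<Longrightarrow> y i = 1 \<Longrightarrow> i \<le> q \<Longrightarrow> q \<le> T \<Longrightarrow> q \<le> i + L - 1 \<Longrightarrow> y q = 1"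
proof -
  assume a: "i \<in> {2..T}" "y (i-1) = 0" "y i = 1" "i \<le> q" "q \<le> T" "q \<le> i + L - 1"
  then have "- y (i - 1) + y i - y q \<le> 0" using bspec[OF bspec[OF c2, of i], of q] by auto
  moreover have "y q = 0 \<or> y q = 1" using y01[of q] a by auto
  ultimately show ?thesis using a by auto
qed

lemma R1: "2 \<le> r \<Longrightarrow> q \<le> T \<Longrightarrow> r \<le> q \<Longrightarrow> y (r-1) = 0 \<Longrightarrow> (\<forall>i\<in>{r..q}. y i = 1) \<Longrightarrow> x q \<le> Vb + real (q-r) * V"
proof (induction q)
  case 0 then show ?case by simp
next
  case (Suc q)
  show ?case
  proof (cases "r = Suc q")
    case True
    then have "x (Suc q) - x q \<le> Vb" using up0[of "Suc q"] Suc.prems by auto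
    moreover have "x q = 0" using x0[of q] Suc.prems True by auto
    ultimately show ?thesis using True by simp
  next
    case False
    then have "r \<le> q" using Suc.prems by auto
    then have ih: "x q \<le> Vb + real (q-r) * V" using Suc by auto
    have "x (Suc q) - x q \<le> V" using up1[of "Suc q"] Suc.prems \<open>r \<le> q\<close> by auto
    then show ?thesis using ih \<open>r \<le> q\<close> by (simp add: Suc_diff_le algebra_simps)
  qed
qed

lemma R2: "1 \<le> q \<Longrightarrow> r + 1 \<le> T \<Longrightarrow> q \<le> r \<Longrightarrow> y (r+1) = 0 \<Longrightarrow> (\<forall>i\<in>{q..r}. y i = 1) \<Longrightarrow> x q \<le> Vb + real (r-q) * V"
proof (induction "r - q" arbitrary: q)
  case 0
  then have "q = r" by simp
  then have "x r - x (r+1) \<le> Vb" using dn0[of "r+1"] 0 by auto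
  moreover have "x (r+1) = 0" using x0[of "r+1"] 0 by auto
  ultimately show ?case using \<open>q = r\<close> by simp
next
  case (Suc d)
  have ih: "x (q+1) \<le> Vb + real (r-(q+1)) * V"
    using Suc.hyps(1)[of "q+1"] Suc.hyps(2) Suc.prems by auto
  have "x q - x (q+1) \<le> V" using dn1[of "q+1"] Suc by auto
  then show ?case using ih Suc(2) by (simp add: algebra_simps of_nat_diff)
qed

lemma R3: "1 \<le> p \<Longrightarrow> p \<le> q \<Longrightarrow> q \<le> T \<Longrightarrow> (\<forall>i\<in>{p..q}. y i = 1) \<Longrightarrow> x q - x p \<le> real (q-p) * V \<and> x p - x q \<le> real (q-p) * V"
proof (induction q)
  case 0 then show ?case by simp
next
  case (Suc q)
  show ?case
  proof (cases "p = Suc q")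
    case True then show ?thesis by simp
  next
    case False
    then have pq: "p \<le> q" using Suc.prems by auto
    then have ih: "x q - x p \<le> real (q-p) * V \<and> x p - x q \<le> real (q-p) * V" using Suc by auto
    have "x (Suc q) - x q \<le> V" "x q - x (Suc q) \<le> V"
      using up1[of "Suc q"] dn1[of "Suc q"] Suc.prems pq by auto
    then show ?thesis using ih pq by (simp add: Suc_diff_le algebra_simps)
  qed
qed

lemma MU: "1 \<le> p \<Longrightarrow> p < q \<Longrightarrow> y p = 0 \<Longrightarrow> y q = 1 \<Longrightarrow> q \<le> r \<Longrightarrow> r \<le> p + L \<Longrightarrow> r \<le> T \<Longrightarrow> y r = 1"
proof -
  assume a: "1 \<le> p" "p < q" "y p = 0" "y q = 1" "q \<le> r" "r \<le> p + L" "r \<le> T"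
  define r0 where "r0 = (LEAST i. p < i \<and> y i = 1)"
  have r0: "p < r0 \<and> y r0 = 1" unfolding r0_def by (rule LeastI[of _ q]) (use a in auto)
  have r0q: "r0 \<le> q" unfolding r0_def by (rule Least_le) (use a in auto)
  have "y (r0-1) = 0"
  proof (cases "r0 - 1 = p")
    case True then show ?thesis using a by simp
  next
    case False
    then have "p < r0 - 1" using r0 by auto
    moreover have "\<not> (p < r0 - 1 \<and> y (r0-1) = 1)"
      using not_less_Least[of "r0-1" "\<lambda>i. p < i \<and> y i = 1"] r0 r0_def by auto
    ultimately show ?thesis using y01[of "r0-1"] a r0q by auto
  qed
  then show ?thesis using minup[of r0 r] a r0 r0q by auto
qed


lemma valid1:
  assumes Cu: "Cu > 0" and V: "V > 0" and Vb1: "Cu < Vb" and Vb2: "Vb < Cu + V"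
    and k: "1 \<le> k" and m: "m \<le> k - 1"
    and S: "S \<subseteq> {s. s \<le> k - 1 \<and> int s \<le> int L - int m - 2}"
    and t: "k + 1 \<le> t" "t + m + 1 \<le> T"
  shows "x t - x (t - k) \<le> rhs1 Cu V Vb k m S t y"
proof -
  define c where "c s = Cu + real (k - s) * V - Vb" for s
  define d where "d s = y (t - s) - y (t - s - 1)" for s
  have finS: "finite S" using S by (rule finite_subset) auto
  have Sk: "s \<le> k - 1" "s + m + 2 \<le> L" if "s \<in> S" for s using S that by auto
  have cpos: "c s > 0" if "s \<le> k - 1" for s
  proof -
    have "real (k - s) \<ge> 1" using that k by auto
    then have "real (k - s) * V \<ge> V" using V by simp
    then show ?thesis using Vb2 unfolding c_def by simp
  qed
  have apos: "Cu + real (k - m) * V - Vb > 0" using cpos[OF m] unfolding c_def .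
  have yr: "y i = 0 \<or> y i = 1" if "1 \<le> i" "i \<le> T" for i using y01 that by auto
  have ynn: "y i \<ge> 0" if "1 \<le> i" "i \<le> T" for i using yr[OF that] by auto
  have tk: "1 \<le> t - k" "t - k \<le> T" "t \<le> T" "1 \<le> t" using t k by auto
  have xk: "x (t - k) \<ge> Cu * y (t - k)"
  proof (cases "y (t-k) = 0")
    case True then show ?thesis using x0[of "t-k"] tk by auto
  next
    case False then have "y (t-k) = 1" using yr[of "t-k"] tk by auto
    then show ?thesis using x1[of "t-k"] tk by auto
  qed
  have rng: "1 \<le> t - s - 1" "t - s - 1 \<le> T" "1 \<le> t - s" "t - s \<le> T" if "s \<in> S" for s
    using Sk[OF that] t k by auto
  have dle: "d s \<le> 1" if "s \<in> S" for s using yr[of "t-s"] yr[of "t-s-1"] rng[OF that] unfolding d_def by auto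
  have d1: "y (t-s-1) = 0 \<and> y (t-s) = 1" if "s \<in> S" "d s > 0" for s
    using yr[of "t-s"] yr[of "t-s-1"] rng[OF that(1)] that(2) unfolding d_def by auto
  have sumS: "(\<Sum>s\<in>S. c s * d s) \<le> 0" if "\<forall>s\<in>S. d s \<le> 0"
  proof (rule sum_nonpos)
    fix s assume "s \<in> S"
    then show "c s * d s \<le> 0" using that cpos[OF Sk(1)[of s]] by (simp add: mult_nonneg_nonpos)
  qed
  have R: "rhs1 Cu V Vb k m S t y = (Cu + real (k - m) * V - Vb) * y (t + m + 1)
               + V * (\<Sum>i=1..m. y (t + i)) + Vb * y t - Cu * y (t - k) - (\<Sum>s\<in>S. c s * d s)"
    unfolding rhs1_def c_def d_def by simp
  have sumy: "(\<Sum>i=1..m. y (t + i)) \<ge> 0" by (rule sum_nonneg) (use ynn t in auto)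
  show ?thesis
  proof (cases "y t = 0")
    case True
    then have xt: "x t = 0" using x0[of t] t by auto
    have "\<forall>s\<in>S. d s \<le> 0"
    proof (rule ccontr)
      assume "\<not> (\<forall>s\<in>S. d s \<le> 0)"
      then obtain s where s: "s \<in> S" "d s > 0" by force
      then have "y (t-s-1) = 0" "y (t-s) = 1" using d1 by auto
      then have "y t = 1" using MU[of "t-s-1" "t-s" t] rng[OF s(1)] Sk[OF s(1)] t by auto
      then show False using True by simp
    qed
    then have "(\<Sum>s\<in>S. c s * d s) \<le> 0" by (rule sumS)
    moreover have "(Cu + real (k - m) * V - Vb) * y (t + m + 1) \<ge> 0"
      using apos ynn[of "t+m+1"] t by auto
    moreover have "V * (\<Sum>i=1..m. y (t + i)) \<ge> 0" using sumy V by auto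
    moreover have "Vb * y t = 0" using True by simp
    ultimately show ?thesis using R xt xk by linarith
  next
    case False
    then have yt: "y t = 1" using yr[of t] t by auto
    show ?thesis
    proof (cases "\<exists>\<sigma>\<in>S. d \<sigma> > 0")
      case True
      then obtain \<sigma> where sg: "\<sigma> \<in> S" "d \<sigma> > 0" by blast
      have y0: "y (t-\<sigma>-1) = 0" and y1: "y (t-\<sigma>) = 1" using d1[OF sg] by auto
      have on: "y r = 1" if "t - \<sigma> \<le> r" "r \<le> t + m + 1" for r
      proof (cases "r = t - \<sigma>")
        case True then show ?thesis using y1 by simp
      next
        case False
        have a1: "t-\<sigma>-1 < t-\<sigma>" "r \<le> t-\<sigma>-1+L" "r \<le> T" "1 \<le> t-\<sigma>-1"
          using Sk[OF sg(1)] t that k by linarith+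
        then show ?thesis using MU[of "t-\<sigma>-1" "t-\<sigma>" r] that y0 y1 by auto
      qed
      have oth: "d s \<le> 0" if "s \<in> S" "s \<noteq> \<sigma>" for s
      proof (cases "s < \<sigma>")
        case True
        then have "y (t-s-1) = 1" using on[of "t-s-1"] Sk[OF sg(1)] t by auto
        then show ?thesis using yr[of "t-s"] rng[OF that(1)] unfolding d_def by auto
      next
        case False
        then have gt: "\<sigma> < s" using that by auto
        show ?thesis
        proof (rule ccontr)
          assume "\<not> d s \<le> 0"
          then have "y (t-s-1) = 0" "y (t-s) = 1" using d1[OF that(1)] by auto
          moreover have "t-s-1 < t-s" "t-s \<le> t-\<sigma>-1" "t-\<sigma>-1 \<le> t-s-1+L" "1 \<le> t-s-1" "t-\<sigma>-1 \<le> T"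
            using rng[OF that(1)] rng[OF sg(1)] Sk[OF that(1)] gt t by linarith+
          ultimately have "y (t-\<sigma>-1) = 1"
            using MU[of "t-s-1" "t-s" "t-\<sigma>-1"] by auto
          then show False using y0 by simp
        qed
      qed
      have "(\<Sum>s\<in>S. c s * d s) = c \<sigma> * d \<sigma> + (\<Sum>s\<in>S-{\<sigma>}. c s * d s)"
        using finS sg(1) by (simp add: sum.remove)
      moreover have "(\<Sum>s\<in>S-{\<sigma>}. c s * d s) \<le> 0"
      proof (rule sum_nonpos)
        fix s assume "s \<in> S - {\<sigma>}"
        then show "c s * d s \<le> 0" using oth[of s] cpos[OF Sk(1)[of s]] by (simp add: mult_nonneg_nonpos)
      qed
      moreover have "c \<sigma> * d \<sigma> \<le> c \<sigma>" using dle[OF sg(1)] cpos[OF Sk(1)[OF sg(1)]] by simp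
      ultimately have sS: "(\<Sum>s\<in>S. c s * d s) \<le> c \<sigma>" by linarith
      have sm: "(\<Sum>i=1..m. y (t + i)) = real m"
        using on by (simp add: sum.cong[of "{1..m}" "{1..m}" "\<lambda>i. y (t+i)" "\<lambda>i. 1"])
      have ym: "y (t+m+1) = 1" using on[of "t+m+1"] by auto
      have two: "2 \<le> t - \<sigma>" "t - \<sigma> - 1 = t - Suc \<sigma>" using Sk[OF sg(1)] t k by linarith+
      have xt: "x t \<le> Vb + real (t - (t-\<sigma>)) * V"
        using R1[of "t-\<sigma>" t] y0 on two tk by auto
      have "t - (t - \<sigma>) = \<sigma>" using Sk[OF sg(1)] t by auto
      then have xt': "x t \<le> Vb + real \<sigma> * V" using xt by simp
      have "real (k - m) = real k - real m" "real (k - \<sigma>) = real k - real \<sigma>"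
        using m k Sk[OF sg(1)] by auto
      then have "(Cu + real (k - m) * V - Vb) * 1 + V * real m + Vb * 1 - c \<sigma> = Vb + real \<sigma> * V"
        unfolding c_def by (simp add: algebra_simps)
      then show ?thesis using R sS sm ym yt xt' xk by (simp add: algebra_simps)
    next
      case False
      then have "\<forall>s\<in>S. d s \<le> 0" by auto
      then have sS: "(\<Sum>s\<in>S. c s * d s) \<le> 0" by (rule sumS)
      show ?thesis
      proof (cases "\<forall>r\<in>{t..t+m+1}. y r = 1")
        case True
        have sm: "(\<Sum>i=1..m. y (t + i)) = real m"
          using True by (simp add: sum.cong[of "{1..m}" "{1..m}" "\<lambda>i. y (t+i)" "\<lambda>i. 1"])
        have ym: "y (t+m+1) = 1" using True by auto
        have "real (k - m) = real k - real m" using m k by auto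
        then have Rv: "rhs1 Cu V Vb k m S t y \<ge> Cu + real k * V - Cu * y (t - k)"
          using R sS sm ym yt by (simp add: algebra_simps)
        show ?thesis
        proof (cases "\<forall>r\<in>{t-k..t}. y r = 1")
          case True
          then have "x t - x (t-k) \<le> real (t - (t-k)) * V" using R3[of "t-k" t] t by auto
          moreover have "t - (t-k) = k" using t by auto
          moreover have "y (t-k) = 1" using True t by auto
          ultimately show ?thesis using Rv by simp
        next
          case False
          define Q where "Q = {q\<in>{t-k..t}. y q = 0}"
          have Qne: "Q \<noteq> {}"
          proof -
            obtain r where r: "r \<in> {t-k..t}" "y r \<noteq> 1" using False by blast
            then have "y r = 0" using yr[of r] tk by auto
            then show ?thesis using r unfolding Q_def by blast
          qed
          have Qf: "finite Q" unfolding Q_def by auto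
          define q0 where "q0 = Max Q"
          have q0Q: "q0 \<in> Q" using Qne Qf q0_def by auto
          have q0t: "q0 < t" using q0Q yt unfolding Q_def by (cases "q0 = t") auto
          have q0k: "t - k \<le> q0" using q0Q unfolding Q_def by auto
          have onr: "\<forall>i\<in>{q0+1..t}. y i = 1"
          proof
            fix i assume i: "i \<in> {q0+1..t}"
            have "i \<notin> Q" using Max_ge[OF Qf, of i] i q0_def by auto
            then show "y i = 1" using yr[of i] i q0k t unfolding Q_def by auto
          qed
          have "x t \<le> Vb + real (t - (q0+1)) * V"
            using R1[of "q0+1" t] onr q0Q q0t q0k t unfolding Q_def by auto
          moreover have "real (t - (q0+1)) \<le> real k - 1" using q0k q0t t by auto
          ultimately have "x t \<le> Vb + (real k - 1) * V" using V
            by (smt (verit) mult_right_mono)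
          then show ?thesis using Rv xk Vb2 by (simp add: algebra_simps)
        qed
      next
        case False
        define Q where "Q = {q\<in>{t..t+m+1}. y q = 0}"
        have Qne: "Q \<noteq> {}"
        proof -
          obtain r where r: "r \<in> {t..t+m+1}" "y r \<noteq> 1" using False by blast
          then have "y r = 0" using yr[of r] tk t by auto
          then show ?thesis using r unfolding Q_def by blast
        qed
        have Qf: "finite Q" unfolding Q_def by auto
        define q1 where "q1 = Min Q"
        have q1Q: "q1 \<in> Q" using Qne Qf q1_def by auto
        have q1t: "t < q1" using q1Q yt unfolding Q_def by (cases "q1 = t") auto
        have q1m: "q1 \<le> t + m + 1" using q1Q unfolding Q_def by auto
        have onr: "\<forall>i\<in>{t..q1-1}. y i = 1"
        proof
          fix i assume i: "i \<in> {t..q1-1}"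
          have "i \<notin> Q" using Min_le[OF Qf, of i] i q1_def q1t by auto
          then show "y i = 1" using yr[of i] i q1m q1t t unfolding Q_def by auto
        qed
        define j where "j = q1 - 1 - t"
        have jm: "j \<le> m" using q1m unfolding j_def by auto
        have "x t \<le> Vb + real (q1 - 1 - t) * V"
          using R2[of t "q1-1"] onr q1Q q1t q1m t unfolding Q_def by auto
        then have xt: "x t \<le> Vb + real j * V" unfolding j_def .
        have "(\<Sum>i=1..m. y (t + i)) \<ge> (\<Sum>i=1..j. y (t + i))"
          by (rule sum_mono2) (use jm ynn t in auto)
        moreover have "(\<Sum>i=1..j. y (t + i)) = (\<Sum>i=1..j. 1)"
        proof (rule sum.cong)
          fix i assume "i \<in> {1..j}"
          then have "t + i \<in> {t..q1-1}" unfolding j_def by auto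
          then show "y (t+i) = 1" using onr by blast
        qed simp
        ultimately have sm: "(\<Sum>i=1..m. y (t + i)) \<ge> real j" by simp
        have "(Cu + real (k - m) * V - Vb) * y (t + m + 1) \<ge> 0"
          using apos ynn[of "t+m+1"] t by auto
        moreover have "V * (\<Sum>i=1..m. y (t + i)) \<ge> V * real j" using sm V by simp
        moreover have "Vb * y t = Vb" using yt by simp
        ultimately have "rhs1 Cu V Vb k m S t y \<ge> V * real j + Vb - Cu * y (t - k)"
          using R sS by linarith
        then show ?thesis using xt xk by (simp add: algebra_simps)
      qed
    qed
  qed
qed


lemma valid2:
  assumes Cu: "Cu > 0" and V: "V > 0" and Vb1: "Cu < Vb" and Vb2: "Vb < Cu + V"
    and k: "1 \<le> k" and m: "m \<le> k - 1"
    and S: "S \<subseteq> {s. s \<le> k - 1 \<and> int s \<le> int L - int m - 2}"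
    and t: "m + 2 \<le> t" "t + k \<le> T"
  shows "x t - x (t + k) \<le> rhs2 Cu V Vb k m S t y"
proof -
  define c where "c s = Cu + real (k - s) * V - Vb" for s
  define d where "d s = y (t + s) - y (t + s + 1)" for s
  have finS: "finite S" using S by (rule finite_subset) auto
  have Sk: "s \<le> k - 1" "s + m + 2 \<le> L" if "s \<in> S" for s using S that by auto
  have cpos: "c s > 0" if "s \<le> k - 1" for s
  proof -
    have "real (k - s) \<ge> 1" using that k by auto
    then have "real (k - s) * V \<ge> V" using V by simp
    then show ?thesis using Vb2 unfolding c_def by simp
  qed
  have apos: "Cu + real (k - m) * V - Vb > 0" using cpos[OF m] unfolding c_def .
  have yr: "y i = 0 \<or> y i = 1" if "1 \<le> i" "i \<le> T" for i using y01 that by auto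
  have ynn: "y i \<ge> 0" if "1 \<le> i" "i \<le> T" for i using yr[OF that] by auto
  have tk: "1 \<le> t - m - 1" "t + k \<le> T" "t \<le> T" "1 \<le> t" using t k by auto
  have xk: "x (t + k) \<ge> Cu * y (t + k)"
  proof (cases "y (t+k) = 0")
    case True then show ?thesis using x0[of "t+k"] tk by auto
  next
    case False then have "y (t+k) = 1" using yr[of "t+k"] tk by auto
    then show ?thesis using x1[of "t+k"] tk by auto
  qed
  have rng: "t + s + 1 \<le> T" "1 \<le> t + s" if "s \<in> S" for s
    using Sk[OF that] t k by auto
  have dle: "d s \<le> 1" if "s \<in> S" for s using yr[of "t+s"] yr[of "t+s+1"] rng[OF that] unfolding d_def by auto
  have d1: "y (t+s+1) = 0 \<and> y (t+s) = 1" if "s \<in> S" "d s > 0" for s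
    using yr[of "t+s"] yr[of "t+s+1"] rng[OF that(1)] that(2) unfolding d_def by auto
  have sumS: "(\<Sum>s\<in>S. c s * d s) \<le> 0" if "\<forall>s\<in>S. d s \<le> 0"
  proof (rule sum_nonpos)
    fix s assume "s \<in> S"
    then show "c s * d s \<le> 0" using that cpos[OF Sk(1)[of s]] by (simp add: mult_nonneg_nonpos)
  qed
  have R: "rhs2 Cu V Vb k m S t y = (Cu + real (k - m) * V - Vb) * y (t - m - 1)
               + V * (\<Sum>i=1..m. y (t - i)) + Vb * y t - Cu * y (t + k) - (\<Sum>s\<in>S. c s * d s)"
    unfolding rhs2_def c_def d_def by simp
  have sumy: "(\<Sum>i=1..m. y (t - i)) \<ge> 0" by (rule sum_nonneg) (use ynn t in auto)
  show ?thesis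
  proof (cases "y t = 0")
    case True
    then have xt: "x t = 0" using x0[of t] tk by auto
    have "\<forall>s\<in>S. d s \<le> 0"
    proof (rule ccontr)
      assume "\<not> (\<forall>s\<in>S. d s \<le> 0)"
      then obtain s where s: "s \<in> S" "d s > 0" by force
      then have a: "y (t+s+1) = 0" "y (t+s) = 1" using d1 by auto
      then have "s \<noteq> 0" using True by (cases "s = 0") auto
      then have "t < t + s" "t + s + 1 \<le> t + L" using Sk[OF s(1)] by auto
      then have "y (t+s+1) = 1" using MU[of t "t+s" "t+s+1"] a True rng[OF s(1)] tk by auto
      then show False using a by simp
    qed
    then have "(\<Sum>s\<in>S. c s * d s) \<le> 0" by (rule sumS)
    moreover have "(Cu + real (k - m) * V - Vb) * y (t - m - 1) \<ge> 0"
      using apos ynn[of "t-m-1"] tk by auto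
    moreover have "V * (\<Sum>i=1..m. y (t - i)) \<ge> 0" using sumy V by auto
    moreover have "Vb * y t = 0" using True by simp
    ultimately show ?thesis using R xt xk by linarith
  next
    case False
    then have yt: "y t = 1" using yr[of t] tk by auto
    show ?thesis
    proof (cases "\<exists>\<sigma>\<in>S. d \<sigma> > 0")
      case True
      then obtain \<sigma> where sg: "\<sigma> \<in> S" "d \<sigma> > 0" by blast
      have y0: "y (t+\<sigma>+1) = 0" and y1: "y (t+\<sigma>) = 1" using d1[OF sg] by auto
      have on: "y r = 1" if "t - m - 1 \<le> r" "r \<le> t + \<sigma>" for r
      proof (cases "r = t + \<sigma>")
        case True then show ?thesis using y1 by simp
      next
        case False
        show ?thesis
        proof (rule ccontr)
          assume "y r \<noteq> 1"
          then have yr0: "y r = 0" using yr[of r] that tk rng[OF sg(1)] by auto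
          have a1: "r < t+\<sigma>" "t+\<sigma> \<le> t+\<sigma>+1" "t+\<sigma>+1 \<le> r+L" "t+\<sigma>+1 \<le> T" "1 \<le> r"
            using Sk[OF sg(1)] t that False tk rng[OF sg(1)] by linarith+
          then have "y (t+\<sigma>+1) = 1" using MU[of r "t+\<sigma>" "t+\<sigma>+1"] yr0 y1 by auto
          then show False using y0 by simp
        qed
      qed
      have oth: "d s \<le> 0" if "s \<in> S" "s \<noteq> \<sigma>" for s
      proof (cases "s < \<sigma>")
        case True
        then have "y (t+s+1) = 1" using on[of "t+s+1"] by auto
        then show ?thesis using yr[of "t+s"] rng[OF that(1)] unfolding d_def by auto
      next
        case False
        then have gt: "\<sigma> < s" using that by auto
        show ?thesis
        proof (rule ccontr)
          assume "\<not> d s \<le> 0"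
          then have a: "y (t+s+1) = 0" "y (t+s) = 1" using d1[OF that(1)] by auto
          then have ne: "t+\<sigma>+1 \<noteq> t+s" using y0 by auto
          have "t+\<sigma>+1 < t+s" "t+s \<le> t+s+1" "t+s+1 \<le> t+\<sigma>+1+L" "1 \<le> t+\<sigma>+1" "t+s+1 \<le> T"
            using rng[OF that(1)] Sk[OF that(1)] gt ne by linarith+
          then have "y (t+s+1) = 1"
            using MU[of "t+\<sigma>+1" "t+s" "t+s+1"] a y0 by auto
          then show False using a by simp
        qed
      qed
      have "(\<Sum>s\<in>S. c s * d s) = c \<sigma> * d \<sigma> + (\<Sum>s\<in>S-{\<sigma>}. c s * d s)"
        using finS sg(1) by (simp add: sum.remove)
      moreover have "(\<Sum>s\<in>S-{\<sigma>}. c s * d s) \<le> 0"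
      proof (rule sum_nonpos)
        fix s assume "s \<in> S - {\<sigma>}"
        then show "c s * d s \<le> 0" using oth[of s] cpos[OF Sk(1)[of s]] by (simp add: mult_nonneg_nonpos)
      qed
      moreover have "c \<sigma> * d \<sigma> \<le> c \<sigma>" using dle[OF sg(1)] cpos[OF Sk(1)[OF sg(1)]] by simp
      ultimately have sS: "(\<Sum>s\<in>S. c s * d s) \<le> c \<sigma>" by linarith
      have "(\<Sum>i=1..m. y (t - i)) = (\<Sum>i=1..m. 1)"
        by (rule sum.cong) (use on t in auto)
      then have sm: "(\<Sum>i=1..m. y (t - i)) = real m" by simp
      have ym: "y (t-m-1) = 1" using on[of "t-m-1"] by auto
      have "\<forall>i\<in>{t..t + \<sigma>}. y i = 1" using on tk by auto
      then have xt: "x t \<le> Vb + real (t + \<sigma> - t) * V"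
        using R2[of t "t+\<sigma>"] y0 rng[OF sg(1)] tk by auto
      then have xt': "x t \<le> Vb + real \<sigma> * V" by simp
      have "real (k - m) = real k - real m" "real (k - \<sigma>) = real k - real \<sigma>"
        using m k Sk[OF sg(1)] by auto
      then have "(Cu + real (k - m) * V - Vb) * 1 + V * real m + Vb * 1 - c \<sigma> = Vb + real \<sigma> * V"
        unfolding c_def by (simp add: algebra_simps)
      then show ?thesis using R sS sm ym yt xt' xk by (simp add: algebra_simps)
    next
      case False
      then have "\<forall>s\<in>S. d s \<le> 0" by auto
      then have sS: "(\<Sum>s\<in>S. c s * d s) \<le> 0" by (rule sumS)
      show ?thesis
      proof (cases "\<forall>r\<in>{t-m-1..t}. y r = 1")
        case True
        have "(\<Sum>i=1..m. y (t - i)) = (\<Sum>i=1..m. 1)"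
          by (rule sum.cong) (use True t in auto)
        then have sm: "(\<Sum>i=1..m. y (t - i)) = real m" by simp
        have ym: "y (t-m-1) = 1" using True by auto
        have "real (k - m) = real k - real m" using m k by auto
        then have Rv: "rhs2 Cu V Vb k m S t y \<ge> Cu + real k * V - Cu * y (t + k)"
          using R sS sm ym yt by (simp add: algebra_simps)
        show ?thesis
        proof (cases "\<forall>r\<in>{t..t+k}. y r = 1")
          case True
          then have "x t - x (t+k) \<le> real (t + k - t) * V" using R3[of t "t+k"] tk by auto
          moreover have "y (t+k) = 1" using True by auto
          ultimately show ?thesis using Rv by simp
        next
          case False
          define Q where "Q = {q\<in>{t..t+k}. y q = 0}"
          have Qne: "Q \<noteq> {}"
          proof -
            obtain r where r: "r \<in> {t..t+k}" "y r \<noteq> 1" using False by blast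
            then have "y r = 0" using yr[of r] tk by auto
            then show ?thesis using r unfolding Q_def by blast
          qed
          have Qf: "finite Q" unfolding Q_def by auto
          define q1 where "q1 = Min Q"
          have q1Q: "q1 \<in> Q" using Qne Qf q1_def by auto
          have q1t: "t < q1" using q1Q yt unfolding Q_def by (cases "q1 = t") auto
          have q1k: "q1 \<le> t + k" using q1Q unfolding Q_def by auto
          have onr: "\<forall>i\<in>{t..q1-1}. y i = 1"
          proof
            fix i assume i: "i \<in> {t..q1-1}"
            have "i \<notin> Q" using Min_le[OF Qf, of i] i q1_def q1t by auto
            then show "y i = 1" using yr[of i] i q1k q1t tk unfolding Q_def by auto
          qed
          have "x t \<le> Vb + real (q1 - 1 - t) * V"
            using R2[of t "q1-1"] onr q1Q q1t q1k tk unfolding Q_def by auto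
          moreover have "real (q1 - 1 - t) \<le> real k - 1" using q1k q1t by auto
          ultimately have "x t \<le> Vb + (real k - 1) * V" using V
            by (smt (verit) mult_right_mono)
          then show ?thesis using Rv xk Vb2 by (simp add: algebra_simps)
        qed
      next
        case False
        define Q where "Q = {q\<in>{t-m-1..t}. y q = 0}"
        have Qne: "Q \<noteq> {}"
        proof -
          obtain r where r: "r \<in> {t-m-1..t}" "y r \<noteq> 1" using False by blast
          then have "y r = 0" using yr[of r] tk by auto
          then show ?thesis using r unfolding Q_def by blast
        qed
        have Qf: "finite Q" unfolding Q_def by auto
        define q0 where "q0 = Max Q"
        have q0Q: "q0 \<in> Q" using Qne Qf q0_def by auto
        have q0t: "q0 < t" using q0Q yt unfolding Q_def by (cases "q0 = t") auto
        have q0m: "t - m - 1 \<le> q0" using q0Q unfolding Q_def by auto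
        have onr: "\<forall>i\<in>{q0+1..t}. y i = 1"
        proof
          fix i assume i: "i \<in> {q0+1..t}"
          have "i \<notin> Q" using Max_ge[OF Qf, of i] i q0_def by auto
          then show "y i = 1" using yr[of i] i q0m tk unfolding Q_def by auto
        qed
        define j where "j = t - (q0 + 1)"
        have jm: "j \<le> m" using q0m unfolding j_def by auto
        have "x t \<le> Vb + real (t - (q0+1)) * V"
          using R1[of "q0+1" t] onr q0Q q0t q0m tk unfolding Q_def by auto
        then have xt: "x t \<le> Vb + real j * V" unfolding j_def .
        have "(\<Sum>i=1..m. y (t - i)) \<ge> (\<Sum>i=1..j. y (t - i))"
          by (rule sum_mono2) (use jm ynn t in auto)
        moreover have "(\<Sum>i=1..j. y (t - i)) = (\<Sum>i=1..j. 1)"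
        proof (rule sum.cong)
          fix i assume "i \<in> {1..j}"
          then have "t - i \<in> {q0+1..t}" unfolding j_def by auto
          then show "y (t-i) = 1" using onr by blast
        qed simp
        ultimately have sm: "(\<Sum>i=1..m. y (t - i)) \<ge> real j" by simp
        have "(Cu + real (k - m) * V - Vb) * y (t - m - 1) \<ge> 0"
          using apos ynn[of "t-m-1"] tk by auto
        moreover have "V * (\<Sum>i=1..m. y (t - i)) \<ge> V * real j" using sm V by simp
        moreover have "Vb * y t = Vb" using yt by simp
        ultimately have "rhs2 Cu V Vb k m S t y \<ge> V * real j + Vb - Cu * y (t + k)"
          using R sS by linarith
        then show ?thesis using xt xk by (simp add: algebra_simps)
      qed
    qed
  qed
qed

end


lemma facet_crit_aux:
  fixes g :: "'a::euclidean_space \<Rightarrow> real" and K :: "'a set"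
  assumes lin: "linear g" and z: "0 \<in> K" and le: "\<forall>p\<in>K. g p \<le> 0"
    and sp: "\<And>v. g v = 0 \<Longrightarrow> v \<in> span {p\<in>K. g p = 0}"
    and p1: "p1 \<in> K" "g p1 \<noteq> 0"
  shows "aff_dim {p \<in> convex hull K. g p = 0} = aff_dim (convex hull K) - 1"
proof -
  define w where "w = adjoint g 1"
  have gw: "g x = w \<bullet> x" for x
    using adjoint_works[OF lin, of x 1] by (simp add: w_def inner_commute)
  have w0: "w \<noteq> 0" using p1 gw by auto
  have "UNIV \<subseteq> span K"
  proof
    fix v :: 'a
    let ?c = "g v / g p1"
    have "g (v - ?c *\<^sub>R p1) = 0" using p1 by (simp add: linear_diff[OF lin] linear_scale[OF lin])
    then have "v - ?c *\<^sub>R p1 \<in> span {p\<in>K. g p = 0}" by (rule sp)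
    also have "\<dots> \<subseteq> span K" by (rule span_mono) auto
    finally have a: "v - ?c *\<^sub>R p1 \<in> span K" .
    have "?c *\<^sub>R p1 \<in> span K" using p1 by (simp add: span_base span_scale)
    from span_add[OF a this] show "v \<in> span K" by simp
  qed
  then have dK: "dim K = DIM('a)"
    by (metis dim_UNIV dim_span span_UNIV subset_antisym top_greatest dim_subset)
  have hK: "aff_dim (convex hull K) = int DIM('a)"
    using aff_dim_eq_dim[of 0 K] z dK by (simp add: hull_inc aff_dim_convex_hull)
  define Z where "Z = {p\<in>K. g p = 0}"
  have "{v. w \<bullet> v = 0} \<subseteq> span Z" using sp gw Z_def by auto
  then have "dim {v. w \<bullet> v = 0} \<le> dim Z"
    by (metis dim_span dim_subset)
  then have "DIM('a) - 1 \<le> dim Z" using dim_hyperplane[OF w0] by simp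
  moreover have "aff_dim Z = int (dim Z)"
  proof -
    have "0 \<in> Z" using z linear_0[OF lin] Z_def by simp
    then show ?thesis using aff_dim_eq_dim[of 0 Z] by (simp add: hull_inc)
  qed
  moreover have "Z \<subseteq> {p \<in> convex hull K. g p = 0}" using Z_def by (auto simp: hull_inc)
  ultimately have lo: "int DIM('a) - 1 \<le> aff_dim {p \<in> convex hull K. g p = 0}"
  proof -
    assume a1: "DIM('a) - 1 \<le> dim Z" and a2: "aff_dim Z = int (dim Z)"
      and a3: "Z \<subseteq> {p \<in> convex hull K. g p = 0}"
    have "int DIM('a) - 1 = int (DIM('a) - 1)" using DIM_positive[where 'a='a] by linarith
    also have "\<dots> \<le> aff_dim Z" using a1 a2 by simp
    also have "\<dots> \<le> aff_dim {p \<in> convex hull K. g p = 0}" using a3 by (rule aff_dim_subset)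
    finally show ?thesis .
  qed
  have "aff_dim {p \<in> convex hull K. g p = 0} \<le> aff_dim {x. w \<bullet> x = 0}"
    by (rule aff_dim_subset) (auto simp: gw)
  then have hi: "aff_dim {p \<in> convex hull K. g p = 0} \<le> int DIM('a) - 1"
    using aff_dim_hyperplane[OF w0, of 0] by simp
  show ?thesis using lo hi hK by simp
qed


lemma vf_crit:
  fixes a b :: "'a::euclidean_space \<Rightarrow> real" and K :: "'a set"
  assumes lin: "linear (\<lambda>p. a p - b p)" and z: "0 \<in> K" and le: "\<forall>p\<in>K. a p \<le> b p"
    and sp: "\<And>v. a v - b v = 0 \<Longrightarrow> v \<in> span {p\<in>K. a p = b p}"
    and p1: "p1 \<in> K" "a p1 \<noteq> b p1"
  shows "valid_facet (convex hull K) a b"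
proof -
  let ?g = "\<lambda>p. a p - b p"
  have g0: "\<forall>p\<in>K. ?g p \<le> 0" using le by auto
  have cv: "convex {p. ?g p \<le> 0}"
    unfolding convex_def
  proof (intro allI impI ballI, simp)
    fix x y :: 'a and u v :: real
    assume xy: "a x \<le> b x" "a y \<le> b y" and uv: "0 \<le> u" "0 \<le> v" "u + v = 1"
    have "?g (u *\<^sub>R x + v *\<^sub>R y) = u * ?g x + v * ?g y"
      using linear_add[OF lin] linear_scale[OF lin] by simp
    moreover have "u * ?g x \<le> 0" "v * ?g y \<le> 0" using xy uv by (auto intro: mult_nonneg_nonpos)
    ultimately show "a (u *\<^sub>R x + v *\<^sub>R y) \<le> b (u *\<^sub>R x + v *\<^sub>R y)" by linarith
  qed
  have "convex hull K \<subseteq> {p. ?g p \<le> 0}"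
    by (rule hull_minimal) (use g0 cv in auto)
  then have v: "\<forall>p\<in>convex hull K. a p \<le> b p" by auto
  have "aff_dim {p \<in> convex hull K. ?g p = 0} = aff_dim (convex hull K) - 1"
  proof (rule facet_crit_aux[OF lin z g0 _ p1(1)])
    show "\<And>v. ?g v = 0 \<Longrightarrow> v \<in> span {p\<in>K. ?g p = 0}" using sp by simp
    show "?g p1 \<noteq> 0" using p1 by simp
  qed
  moreover have "{p \<in> convex hull K. ?g p = 0} = {p \<in> convex hull K. a p = b p}" by auto
  ultimately show ?thesis using v unfolding valid_facet_def by simp
qed


lemma sum_axis_comp: "(\<Sum>i\<in>A. c i *\<^sub>R axis i (1::real)) $ j = (if j \<in> A then c j else 0)"
  for A :: "'n::finite set"
  by (simp add: sum_component axis_def if_distrib sum.delta' cong: if_cong)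

lemma span_crit:
  fixes g :: "(real^'n) \<times> (real^'n) \<Rightarrow> real" and Z and a b :: 'n
  assumes lin: "linear g" and Zg: "\<forall>p\<in>Z. g p = 0" and ab: "a \<noteq> b"
    and gx: "\<forall>x. g (x, 0) = x$a - x$b"
    and ax: "\<forall>i. i \<noteq> a \<and> i \<noteq> b \<longrightarrow> (axis i 1, 0) \<in> span Z"
    and on: "((\<chi> i. 1), 0) \<in> span Z"
    and yy: "\<forall>i. \<exists>r\<in>span Z. snd r = axis i 1"
    and gv: "g v = 0"
  shows "v \<in> span Z"
proof -
  obtain r where r: "\<And>i. r i \<in> span Z" "\<And>i. snd (r i) = axis i 1" using yy by metis
  define w where "w = (\<Sum>i\<in>UNIV. (snd v $ i) *\<^sub>R r i)"
  have wZ: "w \<in> span Z" unfolding w_def by (intro span_sum span_scale r)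
  define u where "u = v - w"
  have gw: "g w = 0" using linear_eq_0_on_span[OF lin _ wZ] Zg by auto
  have gu: "g u = 0" unfolding u_def using gv gw linear_diff[OF lin] by simp
  have "snd w = (\<Sum>i\<in>UNIV. (snd v $ i) *\<^sub>R axis i 1)"
    unfolding w_def snd_sum using r(2) by simp
  also have "\<dots> = snd v"
  proof (subst vec_eq_iff, rule allI)
    fix j show "(\<Sum>i\<in>UNIV. (snd v $ i) *\<^sub>R axis i 1) $ j = snd v $ j"
      using sum_axis_comp[of "\<lambda>i. snd v $ i" UNIV j] by simp
  qed
  finally have "snd u = 0" unfolding u_def by simp
  then have ueq: "u = (fst u, 0)" by (metis prod.collapse)
  define f where "f = fst u"
  have fab: "f $ a = f $ b" using gu gx ueq unfolding f_def by (metis eq_iff_diff_eq_0)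
  have "f = (\<Sum>i\<in>UNIV-{a,b}. (f $ i - f $ a) *\<^sub>R axis i 1) + (f $ a) *\<^sub>R (\<chi> i. 1)"
  proof (subst vec_eq_iff, rule allI)
    fix j
    show "f $ j = ((\<Sum>i\<in>UNIV-{a,b}. (f $ i - f $ a) *\<^sub>R axis i 1) + (f $ a) *\<^sub>R (\<chi> i. 1)) $ j"
      using fab sum_axis_comp[of "\<lambda>i. f $ i - f $ a" "UNIV-{a,b}" j] by auto
  qed
  then have eqf: "(f, 0) = (\<Sum>i\<in>UNIV-{a,b}. (f $ i - f $ a) *\<^sub>R (axis i 1, 0)) + (f $ a) *\<^sub>R ((\<chi> i. 1), 0)"
    by (simp add: prod_eq_iff fst_sum snd_sum)
  have inS: "(\<Sum>i\<in>UNIV-{a,b}. (f $ i - f $ a) *\<^sub>R (axis i 1, 0)) + (f $ a) *\<^sub>R ((\<chi> i. 1), 0) \<in> span Z"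
    by (intro span_add span_sum span_scale on) (use ax in auto)
  have "(f, 0) \<in> span Z" by (subst eqf) (rule inS)
  then have "u \<in> span Z" by (subst ueq) (simp add: f_def)
  then have "u + w \<in> span Z" using wZ by (rule span_add)
  then show ?thesis unfolding u_def by simp
qed



lemma feas:
  assumes Y01: "\<forall>i\<in>{1..T}. Y i = 0 \<or> Y i = 1"
    and mono: "(\<forall>i j. 1 \<le> i \<longrightarrow> i \<le> j \<longrightarrow> j \<le> T \<longrightarrow> Y i \<le> Y j) \<or> (\<forall>i j. 1 \<le> i \<longrightarrow> i \<le> j \<longrightarrow> j \<le> T \<longrightarrow> Y j \<le> Y i)"
    and X0: "\<forall>i\<in>{1..T}. Y i = 0 \<longrightarrow> X i = 0"
    and X1: "\<forall>i\<in>{1..T}. Y i = 1 \<longrightarrow> Cu \<le> X i \<and> X i \<le> Cb"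
    and ramp: "\<forall>i\<in>{2..T}. Y (i-1) = 1 \<and> Y i = 1 \<longrightarrow> \<bar>X i - X (i-1)\<bar> \<le> V"
    and su: "\<forall>i\<in>{2..T}. Y (i-1) = 0 \<longrightarrow> X i \<le> Vb"
    and sd: "\<forall>i\<in>{2..T}. Y i = 0 \<longrightarrow> X (i-1) \<le> Vb"
    and pos: "0 \<le> Cu" "0 \<le> V" "0 \<le> Vb"
  shows "ucpc T L l Cb Cu V Vb X Y"
proof -
  have Yr: "Y i = 0 \<or> Y i = 1" if "1 \<le> i" "i \<le> T" for i using Y01 that by auto
  have c1: "\<forall>t\<in>{1..T}. X t \<ge> 0 \<and> Y t \<in> {0, 1}"
  proof
    fix t assume t: "t \<in> {1..T}"
    show "X t \<ge> 0 \<and> Y t \<in> {0, 1}" using Yr[of t] X0 X1 t pos by force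
  qed
  have c2: "\<forall>t\<in>{2..T}. \<forall>k\<in>{t..T}. k \<le> t + L - 1 \<longrightarrow> - Y (t - 1) + Y t - Y k \<le> 0"
  proof (intro ballI impI)
    fix t k assume t: "t \<in> {2..T}" and k: "k \<in> {t..T}"
    have "1 \<le> t - 1" "t - 1 \<le> T" using t by auto
    then have "Y (t-1) \<ge> 0" "Y k \<ge> 0" using Yr[of "t-1"] Yr[of k] t k by auto
    moreover have "Y t \<le> Y k \<or> Y t \<le> Y (t-1)" using mono t k by auto
    ultimately show "- Y (t - 1) + Y t - Y k \<le> 0" by linarith
  qed
  have c3: "\<forall>t\<in>{2..T}. \<forall>k\<in>{t..T}. k \<le> t + l - 1 \<longrightarrow> Y (t - 1) - Y t + Y k \<le> 1"
  proof (intro ballI impI)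
    fix t k assume t: "t \<in> {2..T}" and k: "k \<in> {t..T}"
    have "1 \<le> t - 1" "t - 1 \<le> T" using t by auto
    then have "Y (t-1) \<le> 1" "Y k \<le> 1" using Yr[of "t-1"] Yr[of k] t k by auto
    moreover have "Y (t-1) \<le> Y t \<or> Y k \<le> Y t" using mono t k by auto
    ultimately show "Y (t - 1) - Y t + Y k \<le> 1" by linarith
  qed
  have c4: "\<forall>t\<in>{1..T}. - X t + Cu * Y t \<le> 0 \<and> X t - Cb * Y t \<le> 0"
  proof
    fix t assume t: "t \<in> {1..T}"
    show "- X t + Cu * Y t \<le> 0 \<and> X t - Cb * Y t \<le> 0" using Yr[of t] X0 X1 t by force
  qed
  have c5: "\<forall>t\<in>{2..T}. X t - X (t - 1) \<le> V * Y (t - 1) + Vb * (1 - Y (t - 1))"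
  proof
    fix t assume t: "t \<in> {2..T}"
    have rr: "1 \<le> t - 1" "t - 1 \<le> T" using t by auto
    then have r: "Y (t-1) = 0 \<or> Y (t-1) = 1" "Y t = 0 \<or> Y t = 1" using Yr[of t] Yr[of "t-1"] t by auto
    have "X (t-1) \<ge> 0" "X t \<ge> 0" using c1 t rr by auto
    then show "X t - X (t - 1) \<le> V * Y (t - 1) + Vb * (1 - Y (t - 1))"
      using r ramp su X0 t pos by fastforce
  qed
  have c6: "\<forall>t\<in>{2..T}. X (t - 1) - X t \<le> V * Y t + Vb * (1 - Y t)"
  proof
    fix t assume t: "t \<in> {2..T}"
    have rr: "1 \<le> t - 1" "t - 1 \<le> T" using t by auto
    then have r: "Y (t-1) = 0 \<or> Y (t-1) = 1" "Y t = 0 \<or> Y t = 1" using Yr[of t] Yr[of "t-1"] t by auto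
    have "X (t-1) \<ge> 0" "X t \<ge> 0" using c1 t rr by auto
    then show "X (t - 1) - X t \<le> V * Y t + Vb * (1 - Y t)"
      using r ramp sd X0 t pos by fastforce
  qed
  show ?thesis unfolding ucpc_def using c1 c2 c3 c4 c5 c6 by blast
qed

definition mkp :: "(nat \<Rightarrow> 'n::finite) \<Rightarrow> (nat \<Rightarrow> real) \<Rightarrow> (nat \<Rightarrow> real) \<Rightarrow> (real^'n) \<times> (real^'n)" where
  "mkp ix X Y = ((\<chi> i. X (inv_into {1..CARD('n)} ix i)), (\<chi> i. Y (inv_into {1..CARD('n)} ix i)))"

lemma mkp_xc: "bij_betw ix {1..CARD('n)} UNIV \<Longrightarrow> j \<in> {1..CARD('n)} \<Longrightarrow> xc ix (mkp ix X Y) j = X j"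
  for ix :: "nat \<Rightarrow> 'n::finite"
  unfolding xc_def mkp_def by (simp add: bij_betw_def inv_into_f_f)

lemma mkp_yc: "bij_betw ix {1..CARD('n)} UNIV \<Longrightarrow> j \<in> {1..CARD('n)} \<Longrightarrow> yc ix (mkp ix X Y) j = Y j"
  for ix :: "nat \<Rightarrow> 'n::finite"
  unfolding yc_def mkp_def by (simp add: bij_betw_def inv_into_f_f)

lemma ucpc_cong:
  assumes "ucpc T L l Cb Cu V Vb X Y" "\<forall>j\<in>{1..T}. X' j = X j" "\<forall>j\<in>{1..T}. Y' j = Y j"
  shows "ucpc T L l Cb Cu V Vb X' Y'"
proof -
  have x: "X' j = X j" "Y' j = Y j" if "1 \<le> j" "j \<le> T" for j using assms(2,3) that by auto
  have r: "1 \<le> t - 1" "t - 1 \<le> T" "1 \<le> t" "t \<le> T" if "t \<in> {2..T}" for t using that by auto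
  note u = assms(1)[unfolded ucpc_def]
  have c1: "\<forall>t\<in>{1..T}. X' t \<ge> 0 \<and> Y' t \<in> {0, 1}" using u x by auto
  have c2: "\<forall>t\<in>{2..T}. \<forall>k\<in>{t..T}. k \<le> t + L - 1 \<longrightarrow> - Y' (t - 1) + Y' t - Y' k \<le> 0"
  proof (intro ballI impI)
    fix t k assume t: "t \<in> {2..T}" and k: "k \<in> {t..T}" and "k \<le> t + L - 1"
    then show "- Y' (t - 1) + Y' t - Y' k \<le> 0" using u x[of t] x[of "t-1"] x[of k] r[OF t] by auto
  qed
  have c3: "\<forall>t\<in>{2..T}. \<forall>k\<in>{t..T}. k \<le> t + l - 1 \<longrightarrow> Y' (t - 1) - Y' t + Y' k \<le> 1"
  proof (intro ballI impI)
    fix t k assume t: "t \<in> {2..T}" and k: "k \<in> {t..T}" and "k \<le> t + l - 1"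
    then show "Y' (t - 1) - Y' t + Y' k \<le> 1" using u x[of t] x[of "t-1"] x[of k] r[OF t] by auto
  qed
  have c4: "\<forall>t\<in>{1..T}. - X' t + Cu * Y' t \<le> 0 \<and> X' t - Cb * Y' t \<le> 0" using u x by auto
  have c5: "\<forall>t\<in>{2..T}. X' t - X' (t - 1) \<le> V * Y' (t - 1) + Vb * (1 - Y' (t - 1))"
  proof
    fix t assume t: "t \<in> {2..T}"
    then show "X' t - X' (t - 1) \<le> V * Y' (t - 1) + Vb * (1 - Y' (t - 1))"
      using u x[of t] x[of "t-1"] r[OF t] by auto
  qed
  have c6: "\<forall>t\<in>{2..T}. X' (t - 1) - X' t \<le> V * Y' t + Vb * (1 - Y' t)"
  proof
    fix t assume t: "t \<in> {2..T}"
    then show "X' (t - 1) - X' t \<le> V * Y' t + Vb * (1 - Y' t)"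
      using u x[of t] x[of "t-1"] r[OF t] by auto
  qed
  show ?thesis unfolding ucpc_def using c1 c2 c3 c4 c5 c6 by blast
qed

lemma mkp_UCP:
  fixes ix :: "nat \<Rightarrow> 'n::finite"
  assumes ix: "bij_betw ix {1..CARD('n)} UNIV" and u: "ucpc CARD('n) L l Cb Cu V Vb X Y"
  shows "mkp ix X Y \<in> UCP ix L l Cb Cu V Vb"
proof -
  have "ucpc CARD('n) L l Cb Cu V Vb (xc ix (mkp ix X Y)) (yc ix (mkp ix X Y))"
    by (rule ucpc_cong[OF u]) (use mkp_xc[OF ix] mkp_yc[OF ix] in auto)
  then show ?thesis unfolding UCP_def ucpc_def Let_def by simp
qed

lemma mkp_diff_x:
  fixes ix :: "nat \<Rightarrow> 'n::finite"
  assumes ix: "bij_betw ix {1..CARD('n)} UNIV" and j: "j \<in> {1..CARD('n)}"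
    and same: "\<forall>i\<in>{1..CARD('n)}. i \<noteq> j \<longrightarrow> X1 i = X2 i"
  shows "mkp ix X1 Y - mkp ix X2 Y = ((X1 j - X2 j) *\<^sub>R axis (ix j) 1, 0)"
proof -
  have inv: "inv_into {1..CARD('n)} ix i \<in> {1..CARD('n)}" for i
    using ix by (metis bij_betw_def inv_into_into iso_tuple_UNIV_I)
  have fi: "ix (inv_into {1..CARD('n)} ix i) = i" for i
    using ix by (meson bij_betw_inv_into_right iso_tuple_UNIV_I)
  have ij: "inv_into {1..CARD('n)} ix (ix j) = j" using ix j by (simp add: bij_betw_def inv_into_f_f)
  have h: "X1 (inv_into {1..CARD('n)} ix i) - X2 (inv_into {1..CARD('n)} ix i) = (X1 j - X2 j) * (if i = ix j then 1 else 0)" for i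
  proof -
    show "X1 (inv_into {1..CARD('n)} ix i) - X2 (inv_into {1..CARD('n)} ix i) = (X1 j - X2 j) * (if i = ix j then 1 else 0)"
    proof (cases "i = ix j")
      case True then show ?thesis using ij by simp
    next
      case False
      then have "inv_into {1..CARD('n)} ix i \<noteq> j" using fi by metis
      then show ?thesis using same inv False by simp
    qed
  qed
  have h2: "i \<noteq> ix j \<Longrightarrow> X1 (inv_into {1..CARD('n)} ix i) = X2 (inv_into {1..CARD('n)} ix i)" for i
    using h[of i] by simp
  show ?thesis unfolding mkp_def using ij h2 by (simp add: vec_eq_iff axis_def)
qed

lemma mkp_diff_c:
  fixes ix :: "nat \<Rightarrow> 'n::finite"
  assumes "\<forall>i\<in>{1..CARD('n)}. X1 i = X2 i + c" and ix: "bij_betw ix {1..CARD('n)} UNIV"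
  shows "mkp ix X1 Y - mkp ix X2 Y = (c *\<^sub>R (\<chi> i. 1), 0)"
proof -
  have inv: "inv_into {1..CARD('n)} ix i \<in> {1..CARD('n)}" for i
    using ix by (metis bij_betw_def inv_into_into iso_tuple_UNIV_I)
  show ?thesis unfolding mkp_def using assms inv by (simp add: vec_eq_iff)
qed



definition pv :: "nat \<Rightarrow> nat \<Rightarrow> real" where "pv b j = (if j \<le> b then 1 else 0)"
definition sv :: "nat \<Rightarrow> nat \<Rightarrow> real" where "sv a j = (if a \<le> j then 1 else 0)"

locale P =
  fixes ix :: "nat \<Rightarrow> 'n::finite"
    and L l k m :: nat
    and Cb Cu V Vb :: real
    and S :: "nat set"
  assumes ix: "bij_betw ix {1..CARD('n)} UNIV"
    and L: "L \<ge> 1" and l: "l \<ge> 1"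
    and Cb: "Cb > Cu" and Cu: "Cu > 0" and V: "V > 0" and VbV: "Vb + V \<le> Cb"
    and Vb1: "Cu < Vb" and Vb2: "Vb < Cu + V"
    and k: "1 \<le> k" "k \<le> CARD('n) - 1" and kcap: "Cb - Cu - real k * V > 0"
    and m: "m \<le> k - 1"
    and S: "S \<subseteq> {s. s \<le> k - 1 \<and> int s \<le> int L - int m - 2}"
begin


lemma big: "Vb + real (k - 1) * V < Cb"
proof -
  have "real (k - 1) = real k - 1" using k by auto
  then show ?thesis using kcap Vb2 by (simp add: algebra_simps)
qed

lemma bigm: "i \<le> k - 1 \<Longrightarrow> Vb + real i * V < Cb"
proof -
  assume "i \<le> k - 1"
  then have "real i * V \<le> real (k-1) * V" using V by auto
  then show ?thesis using big by linarith
qed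

lemma tight_in:
  assumes u: "ucpc CARD('n) L l Cb Cu V Vb X Y" and a: "\<And>p. p \<in> UCP ix L l Cb Cu V Vb \<Longrightarrow> A p = AA (xc ix p) \<and> B p = BB (yc ix p)"
    and eq: "AA X = BB Y"
    and ca: "\<And>x x'. (\<forall>j\<in>{1..CARD('n)}. x j = x' j) \<Longrightarrow> AA x = AA x'"
    and cb: "\<And>y y'. (\<forall>j\<in>{1..CARD('n)}. y j = y' j) \<Longrightarrow> BB y = BB y'"
  shows "mkp ix X Y \<in> {p \<in> UCP ix L l Cb Cu V Vb. A p = B p}"
proof -
  have m: "mkp ix X Y \<in> UCP ix L l Cb Cu V Vb" by (rule mkp_UCP[OF ix u])
  have "AA (xc ix (mkp ix X Y)) = AA X" by (rule ca) (use mkp_xc[OF ix] in auto)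
  moreover have "BB (yc ix (mkp ix X Y)) = BB Y" by (rule cb) (use mkp_yc[OF ix] in auto)
  ultimately show ?thesis using m a[OF m] eq by simp
qed

lemma pv_feas:
  assumes X0: "\<forall>i\<in>{1..CARD('n)}. i > b \<longrightarrow> X i = 0"
    and X1: "\<forall>i\<in>{1..CARD('n)}. i \<le> b \<longrightarrow> Cu \<le> X i \<and> X i \<le> Cb"
    and ramp: "\<forall>i\<in>{2..CARD('n)}. i \<le> b \<longrightarrow> \<bar>X i - X (i-1)\<bar> \<le> V"
    and sd: "b + 1 \<le> CARD('n) \<longrightarrow> 1 \<le> b \<longrightarrow> X b \<le> Vb"
  shows "ucpc CARD('n) L l Cb Cu V Vb X (pv b)"
proof (rule feas)
  show "\<forall>i\<in>{1..CARD('n)}. pv b i = 0 \<or> pv b i = 1" by (simp add: pv_def)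
  show "(\<forall>i j. 1 \<le> i \<longrightarrow> i \<le> j \<longrightarrow> j \<le> CARD('n) \<longrightarrow> pv b i \<le> pv b j) \<or> (\<forall>i j. 1 \<le> i \<longrightarrow> i \<le> j \<longrightarrow> j \<le> CARD('n) \<longrightarrow> pv b j \<le> pv b i)"
    by (rule disjI2) (simp add: pv_def)
  show "\<forall>i\<in>{1..CARD('n)}. pv b i = 0 \<longrightarrow> X i = 0" using X0 by (simp add: pv_def)
  show "\<forall>i\<in>{1..CARD('n)}. pv b i = 1 \<longrightarrow> Cu \<le> X i \<and> X i \<le> Cb" using X1 by (simp add: pv_def)
  show "\<forall>i\<in>{2..CARD('n)}. pv b (i-1) = 1 \<and> pv b i = 1 \<longrightarrow> \<bar>X i - X (i-1)\<bar> \<le> V" using ramp by (simp add: pv_def)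
  show "\<forall>i\<in>{2..CARD('n)}. pv b (i-1) = 0 \<longrightarrow> X i \<le> Vb"
  proof (intro ballI impI)
    fix i assume i: "i \<in> {2..CARD('n)}" "pv b (i-1) = 0"
    then have "i > b" by (auto simp: pv_def split: if_splits)
    then show "X i \<le> Vb" using X0 i Vb1 Cu by auto
  qed
  show "\<forall>i\<in>{2..CARD('n)}. pv b i = 0 \<longrightarrow> X (i-1) \<le> Vb"
  proof (intro ballI impI)
    fix i assume i: "i \<in> {2..CARD('n)}" "pv b i = 0"
    then have ib: "i > b" by (auto simp: pv_def split: if_splits)
    show "X (i-1) \<le> Vb"
    proof (cases "i - 1 = b")
      case True
      then show ?thesis using sd i X0 Vb1 Cu by (cases "b = 0") auto
    next
      case False
      then have "i - 1 > b" using ib by auto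
      then show ?thesis using X0 i Vb1 Cu by auto
    qed
  qed
qed (use Cu V Vb1 in auto)

lemma sv_feas:
  assumes X0: "\<forall>i\<in>{1..CARD('n)}. i < a \<longrightarrow> X i = 0"
    and X1: "\<forall>i\<in>{1..CARD('n)}. a \<le> i \<longrightarrow> Cu \<le> X i \<and> X i \<le> Cb"
    and ramp: "\<forall>i\<in>{2..CARD('n)}. a < i \<longrightarrow> \<bar>X i - X (i-1)\<bar> \<le> V"
    and su: "2 \<le> a \<longrightarrow> a \<le> CARD('n) \<longrightarrow> X a \<le> Vb"
  shows "ucpc CARD('n) L l Cb Cu V Vb X (sv a)"
proof (rule feas)
  show "\<forall>i\<in>{1..CARD('n)}. sv a i = 0 \<or> sv a i = 1" by (simp add: sv_def)
  show "(\<forall>i j. 1 \<le> i \<longrightarrow> i \<le> j \<longrightarrow> j \<le> CARD('n) \<longrightarrow> sv a i \<le> sv a j) \<or> (\<forall>i j. 1 \<le> i \<longrightarrow> i \<le> j \<longrightarrow> j \<le> CARD('n) \<longrightarrow> sv a j \<le> sv a i)"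
    by (rule disjI1) (simp add: sv_def)
  show "\<forall>i\<in>{1..CARD('n)}. sv a i = 0 \<longrightarrow> X i = 0" using X0 by (simp add: sv_def)
  show "\<forall>i\<in>{1..CARD('n)}. sv a i = 1 \<longrightarrow> Cu \<le> X i \<and> X i \<le> Cb" using X1 by (simp add: sv_def)
  show "\<forall>i\<in>{2..CARD('n)}. sv a (i-1) = 1 \<and> sv a i = 1 \<longrightarrow> \<bar>X i - X (i-1)\<bar> \<le> V" using ramp by (auto simp: sv_def)
  show "\<forall>i\<in>{2..CARD('n)}. sv a (i-1) = 0 \<longrightarrow> X i \<le> Vb"
  proof (intro ballI impI)
    fix i assume i: "i \<in> {2..CARD('n)}" "sv a (i-1) = 0"
    then have ia: "i - 1 < a" by (auto simp: sv_def split: if_splits)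
    show "X i \<le> Vb"
    proof (cases "i = a")
      case True then show ?thesis using su i by auto
    next
      case False
      then have "i < a" using ia by auto
      then show ?thesis using X0 i Vb1 Cu by auto
    qed
  qed
  show "\<forall>i\<in>{2..CARD('n)}. sv a i = 0 \<longrightarrow> X (i-1) \<le> Vb"
  proof (intro ballI impI)
    fix i assume i: "i \<in> {2..CARD('n)}" "sv a i = 0"
    then have "i - 1 < a" by (auto simp: sv_def split: if_splits)
    moreover have "i - 1 \<in> {1..CARD('n)}" using i by auto
    ultimately have "X (i-1) = 0" using X0 by blast
    then show "X (i-1) \<le> Vb" using Vb1 Cu by auto
  qed
qed (use Cu V Vb1 in auto)


definition pvec :: "nat \<Rightarrow> real^'n" where "pvec b = (\<chi> i. pv b (inv_into {1..CARD('n)} ix i))"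

lemma inv_rng: "inv_into {1..CARD('n)} ix i \<in> {1..CARD('n)}"
  using ix by (metis bij_betw_def inv_into_into iso_tuple_UNIV_I)

lemma ix_inv: "ix (inv_into {1..CARD('n)} ix i) = i"
  using ix by (meson bij_betw_inv_into_right iso_tuple_UNIV_I)

lemma inv_ix: "j \<in> {1..CARD('n)} \<Longrightarrow> inv_into {1..CARD('n)} ix (ix j) = j"
  using ix by (simp add: bij_betw_def inv_into_f_f)

lemma ix_inj: "i \<in> {1..CARD('n)} \<Longrightarrow> j \<in> {1..CARD('n)} \<Longrightarrow> ix i = ix j \<Longrightarrow> i = j"
  using ix by (metis inv_ix)

lemma snd_pv: "snd (mkp ix X (pv b)) = pvec b" unfolding mkp_def pvec_def by simp

lemma snd_sv: "1 \<le> a \<Longrightarrow> snd (mkp ix X (sv a)) = (\<chi> i. 1) - pvec (a - 1)"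
  unfolding mkp_def pvec_def by (auto simp: vec_eq_iff sv_def pv_def)

lemma snd_one: "snd (mkp ix X (\<lambda>_. 1)) = (\<chi> i. 1)" unfolding mkp_def by simp

lemma snd_one_pv: "(\<chi> i. 1) = pvec CARD('n)"
  unfolding pvec_def pv_def using inv_rng by (auto simp: vec_eq_iff)

lemma yspan:
  assumes "\<forall>b\<in>{0..CARD('n)}. \<exists>q\<in>span Z. snd q = pvec b"
  shows "\<forall>i. \<exists>r\<in>span Z. snd r = axis i 1"
proof
  fix i :: 'n
  define j where "j = inv_into {1..CARD('n)} ix i"
  have j: "j \<in> {1..CARD('n)}" unfolding j_def by (rule inv_rng)
  have j1: "j \<in> {0..CARD('n)}" "j - 1 \<in> {0..CARD('n)}" using j by auto
  obtain q1 where q1: "q1 \<in> span Z" "snd q1 = pvec j" using bspec[OF assms j1(1)] by blast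
  obtain q0 where q0: "q0 \<in> span Z" "snd q0 = pvec (j-1)" using bspec[OF assms j1(2)] by blast
  have "q1 - q0 \<in> span Z" using q1 q0 by (simp add: span_diff)
  moreover have "snd (q1 - q0) = axis i 1"
  proof -
    have "pvec j - pvec (j-1) = axis i 1"
    proof (subst vec_eq_iff, rule allI)
      fix i'
      have "inv_into {1..CARD('n)} ix i' = j \<longleftrightarrow> i' = i" using ix_inv j_def by metis
      then show "(pvec j - pvec (j-1)) $ i' = axis i 1 $ i'"
        unfolding pvec_def pv_def axis_def using j by auto
    qed
    then show ?thesis using q1 q0 by simp
  qed
  ultimately show "\<exists>r\<in>span Z. snd r = axis i 1" by blast
qed

lemma cnt: "j \<le> m' \<Longrightarrow> (\<Sum>i=1..m'. if i \<le> j then 1 else (0::real)) = real j"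
proof (induction m' arbitrary: j)
  case 0 then show ?case by simp
next
  case (Suc m')
  show ?case
  proof (cases "j \<le> m'")
    case True then show ?thesis using Suc by simp
  next
    case False
    then have "j = Suc m'" using Suc by simp
    moreover have "(\<Sum>i=1..m'. if i \<le> Suc m' then 1 else (0::real)) = real m'"
      using Suc.IH[of m'] by (simp add: sum.cong)
    ultimately show ?thesis by simp
  qed
qed

lemma maxdiff: "\<bar>max c u - max c v\<bar> \<le> \<bar>u - v\<bar>" for c u v :: real
  by (simp add: max_def abs_if)

lemma ones_feas:
  assumes "\<forall>i\<in>{1..CARD('n)}. Cu \<le> X i \<and> X i \<le> Cb" "\<forall>i\<in>{2..CARD('n)}. \<bar>X i - X (i-1)\<bar> \<le> V"
  shows "ucpc CARD('n) L l Cb Cu V Vb X (\<lambda>_. 1)"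
  by (rule feas) (use assms Cu V Vb1 in auto)

lemma zero_in: "0 \<in> UCP ix L l Cb Cu V Vb"
proof -
  have "ucpc CARD('n) L l Cb Cu V Vb (\<lambda>_. 0) (\<lambda>_. 0)"
    by (rule feas) (use Cu V Vb1 in auto)
  then have "mkp ix (\<lambda>_. 0) (\<lambda>_. 0) \<in> UCP ix L l Cb Cu V Vb" by (rule mkp_UCP[OF ix])
  moreover have "mkp ix (\<lambda>_. 0) (\<lambda>_. 0) = (0 :: (real^'n) \<times> (real^'n))"
    unfolding mkp_def by (simp add: vec_eq_iff zero_prod_def)
  ultimately show ?thesis by simp
qed

lemma finS: "finite S" using S by (rule finite_subset) auto

lemma Sk: "s \<in> S \<Longrightarrow> s \<le> k - 1 \<and> s + m + 2 \<le> L" using S by auto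

lemma cpos: "s \<le> k - 1 \<Longrightarrow> Cu + real (k - s) * V - Vb > 0"
proof -
  assume "s \<le> k - 1"
  then have "real (k - s) \<ge> 1" using k by auto
  then have "real (k - s) * V \<ge> V" using V by simp
  then show ?thesis using Vb2 by simp
qed

lemma lin_rhs1: "linear (\<lambda>p. xc ix p t - xc ix p t' - rhs1 Cu V Vb k m S t (yc ix p))"
  unfolding linear_iff rhs1_def xc_def yc_def
  by (simp add: algebra_simps sum.distrib sum_distrib_left sum_subtractf scaleR_sum_right)

lemma lin_rhs2: "linear (\<lambda>p. xc ix p t - xc ix p t' - rhs2 Cu V Vb k m S t (yc ix p))"
  unfolding linear_iff rhs2_def xc_def yc_def
  by (simp add: algebra_simps sum.distrib sum_distrib_left sum_subtractf scaleR_sum_right)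

end


locale F1 = P ix L l k m Cb Cu V Vb S
  for ix :: "nat \<Rightarrow> 'n::finite" and L l k m :: nat and Cb Cu V Vb :: real and S :: "nat set" +
  fixes t :: nat
  assumes t1: "k + 1 \<le> t" and t2: "t + m + 1 \<le> CARD('n)"
begin

definition "Zs = {p \<in> UCP ix L l Cb Cu V Vb. xc ix p t - xc ix p (t-k) = rhs1 Cu V Vb k m S t (yc ix p)}"

lemma rng: "1 \<le> t - k" "t \<le> CARD('n)" "t - k < t" "1 \<le> t" using t1 t2 k by auto

lemma rhs1_cong:
  assumes "\<forall>j\<in>{1..CARD('n)}. y j = y' j"
  shows "rhs1 Cu V Vb k m S t y = rhs1 Cu V Vb k m S t y'"
proof -
  have a: "y j = y' j" if "1 \<le> j" "j \<le> CARD('n)" for j using assms that by auto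
  have s1: "(\<Sum>i=1..m. y (t + i)) = (\<Sum>i=1..m. y' (t + i))"
    by (rule sum.cong) (use a t2 in auto)
  have s2: "(\<Sum>s\<in>S. (Cu + real (k - s) * V - Vb) * (y (t - s) - y (t - s - 1))) =
            (\<Sum>s\<in>S. (Cu + real (k - s) * V - Vb) * (y' (t - s) - y' (t - s - 1)))"
  proof (rule sum.cong)
    fix s assume "s \<in> S"
    then have "1 \<le> t - s - 1" "t - s \<le> CARD('n)" using Sk[of s] t1 t2 k by auto
    then show "(Cu + real (k - s) * V - Vb) * (y (t - s) - y (t - s - 1)) =
            (Cu + real (k - s) * V - Vb) * (y' (t - s) - y' (t - s - 1))" using a by simp
  qed simp
  show ?thesis unfolding rhs1_def s1 s2 using a[of "t+m+1"] a[of t] a[of "t-k"] t2 rng by simp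
qed

lemma tight:
  assumes u: "ucpc CARD('n) L l Cb Cu V Vb X Y" and eq: "X t - X (t-k) = rhs1 Cu V Vb k m S t Y"
  shows "mkp ix X Y \<in> Zs"
  unfolding Zs_def
proof (rule tight_in[OF u, where AA = "\<lambda>x. x t - x (t-k)" and BB = "rhs1 Cu V Vb k m S t"])
  show "X t - X (t - k) = rhs1 Cu V Vb k m S t Y" by (rule eq)
  show "\<And>x x'. \<forall>j\<in>{1..CARD('n)}. x j = x' j \<Longrightarrow> x t - x (t - k) = x' t - x' (t - k)"
    using rng by auto
  show "\<And>y y'. \<forall>j\<in>{1..CARD('n)}. y j = y' j \<Longrightarrow> rhs1 Cu V Vb k m S t y = rhs1 Cu V Vb k m S t y'"
    by (rule rhs1_cong)
qed auto

lemma Zs_sub: "Zs \<subseteq> span Zs" by (rule span_superset)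

lemma realkm: "real (k - m) = real k - real m" using m k by auto

lemma z1:
  assumes b: "b < t" and nb: "\<forall>s\<in>S. b \<noteq> t - s - 1"
  shows "mkp ix (\<lambda>j. Cu * pv b j) (pv b) \<in> Zs"
proof (rule tight)
  show "ucpc CARD('n) L l Cb Cu V Vb (\<lambda>j. Cu * pv b j) (pv b)"
    by (rule pv_feas) (use Cb Vb1 V in \<open>auto simp: pv_def\<close>)
  have "\<forall>s\<in>S. pv b (t - s) - pv b (t - s - 1) = 0"
  proof
    fix s assume s: "s \<in> S"
    then have "s < t" using Sk[of s] t1 by auto
    then show "pv b (t - s) - pv b (t - s - 1) = 0" using nb s unfolding pv_def by auto
  qed
  then have "(\<Sum>s\<in>S. (Cu + real (k - s) * V - Vb) * (pv b (t - s) - pv b (t - s - 1))) = 0" by simp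
  moreover have "(\<Sum>i=1..m. pv b (t + i)) = 0" using b by (simp add: pv_def)
  moreover have "pv b t = 0" "pv b (t + m + 1) = 0" using b by (auto simp: pv_def)
  ultimately show "Cu * pv b t - Cu * pv b (t - k) = rhs1 Cu V Vb k m S t (pv b)"
    unfolding rhs1_def by simp
qed

lemma z2:
  assumes b: "t \<le> b" "b \<le> t + m"
  shows "mkp ix (\<lambda>j. if j \<le> b then max Cu (Vb + real (b - t) * V - \<bar>real t - real j\<bar> * V) else 0) (pv b) \<in> Zs"
proof (rule tight)
  define X where "X = (\<lambda>j. if j \<le> b then max Cu (Vb + real (b - t) * V - \<bar>real t - real j\<bar> * V) else 0)"
  have btm: "b - t \<le> k - 1" using b m by auto
  have up: "Vb + real (b - t) * V < Cb" using bigm[OF btm] .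
  show "ucpc CARD('n) L l Cb Cu V Vb X (pv b)"
  proof (rule pv_feas)
    show "\<forall>i\<in>{1..CARD('n)}. b < i \<longrightarrow> X i = 0" unfolding X_def by auto
    show "\<forall>i\<in>{1..CARD('n)}. i \<le> b \<longrightarrow> Cu \<le> X i \<and> X i \<le> Cb"
    proof (intro ballI impI)
      fix i assume "i \<le> b"
      moreover have "\<bar>real t - real i\<bar> * V \<ge> 0" using V by simp
      then have "Vb + real (b - t) * V - \<bar>real t - real i\<bar> * V \<le> Cb" using up by linarith
      ultimately show "Cu \<le> X i \<and> X i \<le> Cb" unfolding X_def using Cb by auto
    qed
    show "\<forall>i\<in>{2..CARD('n)}. i \<le> b \<longrightarrow> \<bar>X i - X (i - 1)\<bar> \<le> V"
    proof (intro ballI impI)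
      fix i assume i: "i \<in> {2..CARD('n)}" "i \<le> b"
      define u where "u = \<bar>real t - real i\<bar>"
      define w where "w = \<bar>real t - real (i-1)\<bar>"
      have "\<bar>u - w\<bar> \<le> 1" using i unfolding u_def w_def by auto
      then have "\<bar>u - w\<bar> * V \<le> 1 * V" using V by (intro mult_right_mono) auto
      moreover have "\<bar>u * V - w * V\<bar> = \<bar>u - w\<bar> * V"
        using V by (simp add: abs_mult left_diff_distrib[symmetric])
      ultimately have h: "\<bar>(Vb + real (b - t) * V - u * V) - (Vb + real (b - t) * V - w * V)\<bar> \<le> V"
        by simp
      have "X i - X (i - 1) = max Cu (Vb + real (b - t) * V - u * V) - max Cu (Vb + real (b - t) * V - w * V)"
        unfolding X_def u_def w_def using i by auto
      then show "\<bar>X i - X (i - 1)\<bar> \<le> V"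
        using maxdiff[of Cu "Vb + real (b - t) * V - u * V" "Vb + real (b - t) * V - w * V"] h by linarith
    qed
    show "b + 1 \<le> CARD('n) \<longrightarrow> 1 \<le> b \<longrightarrow> X b \<le> Vb"
    proof -
      have "\<bar>real t - real b\<bar> = real (b - t)" using b by auto
      then show ?thesis unfolding X_def using Vb1 by auto
    qed
  qed
  have Xt: "X t = Vb + real (b - t) * V"
  proof -
    have "real (b - t) * V \<ge> 0" using V by simp
    then have "Vb + real (b - t) * V \<ge> Cu" using Vb1 by linarith
    then show ?thesis unfolding X_def using b by auto
  qed
  have Xk: "X (t - k) = Cu"
  proof -
    have "\<bar>real t - real (t - k)\<bar> = real k" using rng by auto
    moreover have "real (b - t) \<le> real (k - 1)" using btm by simp
    moreover have "real (k - 1) = real k - 1" using k by simp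
    ultimately have e1: "\<bar>real t - real (t - k)\<bar> * V = real k * V" and e0: "real (b - t) * V \<le> (real k - 1) * V"
      using V by (auto intro: mult_right_mono)
    have e2: "(real k - 1) * V = real k * V - V" by (simp add: algebra_simps)
    have "Vb + real (b - t) * V - \<bar>real t - real (t - k)\<bar> * V \<le> Cu"
      using Vb2 e0 e1 e2 by linarith
    then show ?thesis unfolding X_def using b rng by auto
  qed
  have "(\<Sum>i=1..m. pv b (t + i)) = (\<Sum>i=1..m. if i \<le> b - t then 1 else 0)"
    by (rule sum.cong) (use b in \<open>auto simp: pv_def\<close>)
  also have "\<dots> = real (b - t)" using b by (intro cnt) auto
  finally have sm: "(\<Sum>i=1..m. pv b (t + i)) = real (b - t)" .
  have "\<forall>s\<in>S. pv b (t - s) - pv b (t - s - 1) = 0" using b by (auto simp: pv_def)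
  then have sS: "(\<Sum>s\<in>S. (Cu + real (k - s) * V - Vb) * (pv b (t - s) - pv b (t - s - 1))) = 0" by simp
  have "pv b (t + m + 1) = 0" "pv b t = 1" "pv b (t - k) = 1" using b rng by (auto simp: pv_def)
  then show "X t - X (t - k) = rhs1 Cu V Vb k m S t (pv b)"
    unfolding rhs1_def sm sS Xt Xk by simp
qed


lemma rhs1_ones: "rhs1 Cu V Vb k m S t (\<lambda>_. 1) = real k * V"
  unfolding rhs1_def using realkm by (simp add: algebra_simps)

lemma z3:
  assumes "\<forall>i\<in>{1..CARD('n)}. Cu \<le> X i \<and> X i \<le> Cb" "\<forall>i\<in>{2..CARD('n)}. \<bar>X i - X (i-1)\<bar> \<le> V"
    and "X t - X (t-k) = real k * V"
  shows "mkp ix X (\<lambda>_. 1) \<in> Zs"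
  by (rule tight) (use ones_feas[OF assms(1,2)] assms(3) rhs1_ones in auto)

definition cl :: "nat \<Rightarrow> nat" where "cl j = min (max j (t-k)) t - (t-k)"

lemma cl_le: "cl j \<le> k" unfolding cl_def using rng by auto
lemma cl_step: "cl (i-1) \<le> cl i" "cl i \<le> cl (i-1) + 1" unfolding cl_def by (auto simp: min_def max_def)
lemma cl_t: "cl t = k" "cl (t-k) = 0" unfolding cl_def using rng by auto
lemma cl_ge: "t \<le> j \<Longrightarrow> cl j = k" unfolding cl_def using rng by auto

definition rampX :: "real \<Rightarrow> nat \<Rightarrow> real" where "rampX c j = c + V * real (cl j)"

lemma ramp_props:
  assumes c: "Cu \<le> c" "c + real k * V \<le> Cb"
  shows "\<forall>i\<in>{1..CARD('n)}. Cu \<le> rampX c i \<and> rampX c i \<le> Cb"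
    "\<forall>i\<in>{2..CARD('n)}. \<bar>rampX c i - rampX c (i-1)\<bar> \<le> V"
    "rampX c t - rampX c (t-k) = real k * V"
proof -
  show "\<forall>i\<in>{1..CARD('n)}. Cu \<le> rampX c i \<and> rampX c i \<le> Cb"
  proof
    fix i
    have "V * real (cl i) \<le> V * real k" using cl_le[of i] V by simp
    moreover have "V * real (cl i) \<ge> 0" using V by simp
    ultimately show "Cu \<le> rampX c i \<and> rampX c i \<le> Cb" unfolding rampX_def using c by (simp add: mult.commute)
  qed
  show "\<forall>i\<in>{2..CARD('n)}. \<bar>rampX c i - rampX c (i-1)\<bar> \<le> V"
  proof
    fix i
    have "real (cl i) - real (cl (i-1)) \<ge> 0" "real (cl i) - real (cl (i-1)) \<le> 1"
      using cl_step[of i] by auto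
    moreover have "rampX c i - rampX c (i-1) = V * (real (cl i) - real (cl (i-1)))"
      unfolding rampX_def by (simp add: algebra_simps)
    ultimately show "\<bar>rampX c i - rampX c (i-1)\<bar> \<le> V" using V
      by (simp add: abs_mult mult_le_cancel_left1)
  qed
  show "rampX c t - rampX c (t-k) = real k * V" unfolding rampX_def using cl_t by simp
qed

lemma z3r: "Cu \<le> c \<Longrightarrow> c + real k * V \<le> Cb \<Longrightarrow> mkp ix (rampX c) (\<lambda>_. 1) \<in> Zs"
  using z3 ramp_props by blast

definition eps :: real where "eps = min V (Cb - Cu - real k * V)"

lemma eps: "eps > 0" "eps \<le> V" "Cu + real k * V + eps \<le> Cb"
  unfolding eps_def using V kcap by auto

lemma z7:
  assumes j0: "t < j0" "j0 \<le> CARD('n)"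
  shows "mkp ix ((rampX Cu)(j0 := Cu + real k * V + eps)) (\<lambda>_. 1) \<in> Zs"
proof (rule z3)
  let ?X = "(rampX Cu)(j0 := Cu + real k * V + eps)"
  have base: "\<forall>i\<in>{1..CARD('n)}. Cu \<le> rampX Cu i \<and> rampX Cu i \<le> Cb"
    "\<forall>i\<in>{2..CARD('n)}. \<bar>rampX Cu i - rampX Cu (i-1)\<bar> \<le> V"
    "rampX Cu t - rampX Cu (t-k) = real k * V"
    using ramp_props[of Cu] kcap by auto
  have big: "rampX Cu i = Cu + real k * V" if "t \<le> i" for i
    unfolding rampX_def using cl_ge[OF that] by (simp add: mult.commute)
  show "\<forall>i\<in>{1..CARD('n)}. Cu \<le> ?X i \<and> ?X i \<le> Cb"
    using base(1) eps V k by (auto simp: mult_nonneg_nonneg)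
  show "\<forall>i\<in>{2..CARD('n)}. \<bar>?X i - ?X (i-1)\<bar> \<le> V"
  proof
    fix i assume i: "i \<in> {2..CARD('n)}"
    show "\<bar>?X i - ?X (i-1)\<bar> \<le> V"
    proof (cases "i = j0")
      case True
      then have "?X (i-1) = Cu + real k * V" using big[of "i-1"] j0 i by auto
      then show ?thesis using True eps by auto
    next
      case False
      show ?thesis
      proof (cases "i - 1 = j0")
        case True
        then have "?X i = Cu + real k * V" using big[of i] j0 i False by auto
        then show ?thesis using True eps False by auto
      next
        case False2: False
        then show ?thesis using False base(2) i by auto
      qed
    qed
  qed
  show "?X t - ?X (t-k) = real k * V" using base(3) j0 rng by auto
qed

lemma z4:
  assumes a: "t + m + 2 \<le> a"
  shows "mkp ix (\<lambda>j. Cu * sv a j) (sv a) \<in> Zs"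
proof (rule tight)
  show "ucpc CARD('n) L l Cb Cu V Vb (\<lambda>j. Cu * sv a j) (sv a)"
    by (rule sv_feas) (use Cb Vb1 V in \<open>auto simp: sv_def\<close>)
  have "\<forall>s\<in>S. sv a (t - s) - sv a (t - s - 1) = 0" using a by (auto simp: sv_def)
  then have "(\<Sum>s\<in>S. (Cu + real (k - s) * V - Vb) * (sv a (t - s) - sv a (t - s - 1))) = 0" by simp
  moreover have "(\<Sum>i=1..m. sv a (t + i)) = 0" using a by (simp add: sv_def)
  moreover have "sv a t = 0" "sv a (t + m + 1) = 0" "sv a (t - k) = 0" using a by (auto simp: sv_def)
  ultimately show "Cu * sv a t - Cu * sv a (t - k) = rhs1 Cu V Vb k m S t (sv a)"
    unfolding rhs1_def by simp
qed

lemma z5: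
  assumes sg: "\<sigma> \<in> S"
  shows "mkp ix (\<lambda>j. if t - \<sigma> \<le> j then Vb + V * real (min j t - (t - \<sigma>)) else 0) (sv (t - \<sigma>)) \<in> Zs"
proof -
  define a where "a = t - \<sigma>"
  define X where "X = (\<lambda>j. if a \<le> j then Vb + V * real (min j t - a) else 0)"
  have sk: "\<sigma> \<le> k - 1" using Sk[OF sg] by auto
  have ta: "t - a = \<sigma>" "t - k < a" "a \<le> t" "2 \<le> a" unfolding a_def using sk rng k by auto
  have u: "ucpc CARD('n) L l Cb Cu V Vb X (sv a)"
  proof (rule sv_feas)
    show "\<forall>i\<in>{1..CARD('n)}. i < a \<longrightarrow> X i = 0" unfolding X_def by auto
    show "\<forall>i\<in>{1..CARD('n)}. a \<le> i \<longrightarrow> Cu \<le> X i \<and> X i \<le> Cb"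
    proof (intro ballI impI)
      fix i assume "a \<le> i"
      moreover have "min i t - a \<le> \<sigma>" using ta by auto
      then have "V * real (min i t - a) \<le> real \<sigma> * V" using V by (simp add: mult.commute)
      moreover have "V * real (min i t - a) \<ge> 0" using V by simp
      ultimately show "Cu \<le> X i \<and> X i \<le> Cb" unfolding X_def using bigm[OF sk] Vb1 by auto
    qed
    show "\<forall>i\<in>{2..CARD('n)}. a < i \<longrightarrow> \<bar>X i - X (i - 1)\<bar> \<le> V"
    proof (intro ballI impI)
      fix i assume i: "a < i"
      have "real (min i t - a) - real (min (i-1) t - a) \<ge> 0" "real (min i t - a) - real (min (i-1) t - a) \<le> 1"
        using i by auto
      moreover have "X i - X (i-1) = V * (real (min i t - a) - real (min (i-1) t - a))"
        unfolding X_def using i by (simp add: algebra_simps)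
      ultimately show "\<bar>X i - X (i - 1)\<bar> \<le> V" using V by (simp add: abs_mult mult_le_cancel_left1)
    qed
    show "2 \<le> a \<longrightarrow> a \<le> CARD('n) \<longrightarrow> X a \<le> Vb" unfolding X_def by simp
  qed
  have Xt: "X t = Vb + real \<sigma> * V" unfolding X_def using ta by (simp add: mult.commute)
  have Xk: "X (t - k) = 0" unfolding X_def using ta by simp
  have d: "sv a (t - s) - sv a (t - s - 1) = (if s = \<sigma> then 1 else 0)" if "s \<in> S" for s
  proof -
    have "s < t" using Sk[OF that] rng k by auto
    then show ?thesis unfolding sv_def a_def using ta by auto
  qed
  have "(\<Sum>s\<in>S. (Cu + real (k - s) * V - Vb) * (sv a (t - s) - sv a (t - s - 1)))
      = (\<Sum>s\<in>S. if s = \<sigma> then Cu + real (k - s) * V - Vb else 0)"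
    by (rule sum.cong) (use d in auto)
  also have "\<dots> = Cu + real (k - \<sigma>) * V - Vb" using finS sg by (simp add: sum.delta)
  finally have sS: "(\<Sum>s\<in>S. (Cu + real (k - s) * V - Vb) * (sv a (t - s) - sv a (t - s - 1))) = Cu + real (k - \<sigma>) * V - Vb" .
  have "(\<Sum>i=1..m. sv a (t + i)) = (\<Sum>i=1..m. 1)" by (rule sum.cong) (use ta in \<open>auto simp: sv_def\<close>)
  then have sm: "(\<Sum>i=1..m. sv a (t + i)) = real m" by simp
  have v: "sv a t = 1" "sv a (t + m + 1) = 1" "sv a (t - k) = 0" using ta by (auto simp: sv_def)
  have "real (k - \<sigma>) = real k - real \<sigma>" using sk k by auto
  then have e: "X t - X (t - k) = rhs1 Cu V Vb k m S t (sv a)"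
    unfolding rhs1_def sS sm v Xt Xk using realkm by (simp add: algebra_simps)
  have "mkp ix X (sv a) \<in> Zs" by (rule tight[OF u e])
  then show ?thesis unfolding X_def a_def .
qed

definition X6 :: "nat \<Rightarrow> real \<Rightarrow> nat \<Rightarrow> real" where
  "X6 j0 w j = (if j \<le> t then (if j = t - k then Cu else if j = j0 then w else Vb) else 0)"

lemma z6:
  assumes w: "Cu \<le> w" "w \<le> Vb" and j0: "j0 \<noteq> t"
  shows "mkp ix (X6 j0 w) (pv t) \<in> Zs"
proof (rule tight)
  have rngX: "Cu \<le> X6 j0 w i \<and> X6 j0 w i \<le> Vb" if "i \<le> t" for i
    unfolding X6_def using that w Vb1 by auto
  show "ucpc CARD('n) L l Cb Cu V Vb (X6 j0 w) (pv t)"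
  proof (rule pv_feas)
    show "\<forall>i\<in>{1..CARD('n)}. t < i \<longrightarrow> X6 j0 w i = 0" unfolding X6_def by auto
    show "\<forall>i\<in>{1..CARD('n)}. i \<le> t \<longrightarrow> Cu \<le> X6 j0 w i \<and> X6 j0 w i \<le> Cb"
      using rngX VbV V by fastforce
    show "\<forall>i\<in>{2..CARD('n)}. i \<le> t \<longrightarrow> \<bar>X6 j0 w i - X6 j0 w (i - 1)\<bar> \<le> V"
    proof (intro ballI impI)
      fix i assume "i \<le> t"
      then have "Cu \<le> X6 j0 w i \<and> X6 j0 w i \<le> Vb" "Cu \<le> X6 j0 w (i-1) \<and> X6 j0 w (i-1) \<le> Vb"
        using rngX[of i] rngX[of "i-1"] by auto
      then show "\<bar>X6 j0 w i - X6 j0 w (i - 1)\<bar> \<le> V" using Vb2 by auto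
    qed
    show "t + 1 \<le> CARD('n) \<longrightarrow> 1 \<le> t \<longrightarrow> X6 j0 w t \<le> Vb" unfolding X6_def using j0 rng by auto
  qed
  have "X6 j0 w t = Vb" "X6 j0 w (t - k) = Cu" unfolding X6_def using j0 rng by auto
  moreover have "\<forall>s\<in>S. pv t (t - s) - pv t (t - s - 1) = 0" by (auto simp: pv_def)
  then have "(\<Sum>s\<in>S. (Cu + real (k - s) * V - Vb) * (pv t (t - s) - pv t (t - s - 1))) = 0" by simp
  moreover have "(\<Sum>i=1..m. pv t (t + i)) = 0" by (simp add: pv_def)
  moreover have "pv t t = 1" "pv t (t + m + 1) = 0" "pv t (t - k) = 1" by (auto simp: pv_def)
  ultimately show "X6 j0 w t - X6 j0 w (t - k) = rhs1 Cu V Vb k m S t (pv t)"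
    unfolding rhs1_def by simp
qed


lemma zspan_pv: "\<forall>b\<in>{0..CARD('n)}. \<exists>q\<in>span Zs. snd q = pvec b"
proof
  fix b assume b: "b \<in> {0..CARD('n)}"
  have one: "mkp ix (rampX Cu) (\<lambda>_. 1) \<in> span Zs" using z3r[of Cu] kcap by (auto intro: span_base)
  show "\<exists>q\<in>span Zs. snd q = pvec b"
  proof (cases "b < t")
    case True
    show ?thesis
    proof (cases "\<exists>\<sigma>\<in>S. b = t - \<sigma> - 1")
      case True
      then obtain \<sigma> where sg: "\<sigma> \<in> S" "b = t - \<sigma> - 1" by blast
      define q5 where "q5 = mkp ix (\<lambda>j. if t - \<sigma> \<le> j then Vb + V * real (min j t - (t - \<sigma>)) else 0) (sv (t - \<sigma>))"
      have "q5 \<in> span Zs" unfolding q5_def using z5[OF sg(1)] by (auto intro: span_base)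
      then have "mkp ix (rampX Cu) (\<lambda>_. 1) - q5 \<in> span Zs" using one by (simp add: span_diff)
      moreover have "1 \<le> t - \<sigma>" using Sk[OF sg(1)] rng k by auto
      then have "snd (mkp ix (rampX Cu) (\<lambda>_. 1) - q5) = pvec b"
        unfolding q5_def using sg(2) snd_sv snd_one by simp
      ultimately show ?thesis by blast
    next
      case False
      then have "mkp ix (\<lambda>j. Cu * pv b j) (pv b) \<in> Zs" using z1 \<open>b < t\<close> by auto
      then show ?thesis using snd_pv by (blast intro: span_base)
    qed
  next
    case False
    show ?thesis
    proof (cases "b \<le> t + m")
      case True
      then have "mkp ix (\<lambda>j. if j \<le> b then max Cu (Vb + real (b - t) * V - \<bar>real t - real j\<bar> * V) else 0) (pv b) \<in> Zs"
        using z2 False by auto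
      then show ?thesis using snd_pv by (blast intro: span_base)
    next
      case False
      then have "mkp ix (\<lambda>j. Cu * sv (b+1) j) (sv (b+1)) \<in> span Zs" using z4[of "b+1"] by (auto intro: span_base)
      then have "mkp ix (rampX Cu) (\<lambda>_. 1) - mkp ix (\<lambda>j. Cu * sv (b+1) j) (sv (b+1)) \<in> span Zs"
        using one by (simp add: span_diff)
      moreover have "snd (mkp ix (rampX Cu) (\<lambda>_. 1) - mkp ix (\<lambda>j. Cu * sv (b+1) j) (sv (b+1))) = pvec b"
        using snd_sv[of "b+1"] snd_one by simp
      ultimately show ?thesis by blast
    qed
  qed
qed

lemma zspan_ax:
  assumes i: "i \<noteq> ix t" "i \<noteq> ix (t - k)"
  shows "(axis i 1, 0) \<in> span Zs"
proof -
  define j where "j = inv_into {1..CARD('n)} ix i"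
  have j: "j \<in> {1..CARD('n)}" unfolding j_def by (rule inv_rng)
  have ij: "ix j = i" unfolding j_def by (rule ix_inv)
  have jt: "j \<noteq> t" "j \<noteq> t - k" using i ij by auto
  show ?thesis
  proof (cases "j < t")
    case True
    define h where "h = (Cu + Vb) / 2"
    have h: "Cu \<le> h" "h \<le> Vb" "h - Vb \<noteq> 0" unfolding h_def using Vb1 by auto
    have "mkp ix (X6 j h) (pv t) \<in> span Zs" "mkp ix (X6 j Vb) (pv t) \<in> span Zs"
      using z6[of h j] z6[of Vb j] h jt Vb1 by (auto intro: span_base)
    then have "mkp ix (X6 j h) (pv t) - mkp ix (X6 j Vb) (pv t) \<in> span Zs" by (simp add: span_diff)
    moreover have "mkp ix (X6 j h) (pv t) - mkp ix (X6 j Vb) (pv t) = ((X6 j h j - X6 j Vb j) *\<^sub>R axis (ix j) 1, 0)"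
      by (rule mkp_diff_x[OF ix j]) (auto simp: X6_def)
    moreover have "X6 j h j - X6 j Vb j = h - Vb" unfolding X6_def using True jt by auto
    ultimately have "(h - Vb) *\<^sub>R (axis i 1, 0) \<in> span Zs" using ij by simp
    then have "(1 / (h - Vb)) *\<^sub>R ((h - Vb) *\<^sub>R (axis i 1, 0)) \<in> span Zs" by (rule span_scale)
    then show ?thesis using h(3) by simp
  next
    case False
    then have jt': "t < j" using jt by auto
    let ?X = "(rampX Cu)(j := Cu + real k * V + eps)"
    have "mkp ix ?X (\<lambda>_. 1) \<in> span Zs" "mkp ix (rampX Cu) (\<lambda>_. 1) \<in> span Zs"
      using z7[of j] z3r[of Cu] jt' j kcap by (auto intro: span_base)
    then have "mkp ix ?X (\<lambda>_. 1) - mkp ix (rampX Cu) (\<lambda>_. 1) \<in> span Zs" by (simp add: span_diff)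
    moreover have "mkp ix ?X (\<lambda>_. 1) - mkp ix (rampX Cu) (\<lambda>_. 1) = ((?X j - rampX Cu j) *\<^sub>R axis (ix j) 1, 0)"
      by (rule mkp_diff_x[OF ix j]) auto
    moreover have "rampX Cu j = Cu + real k * V"
      using cl_ge[of j] jt' unfolding rampX_def by (simp add: mult.commute)
    ultimately have "eps *\<^sub>R (axis i 1, 0) \<in> span Zs" using ij by simp
    then have "(1 / eps) *\<^sub>R (eps *\<^sub>R (axis i 1, 0)) \<in> span Zs" by (rule span_scale)
    then show ?thesis using eps(1) by simp
  qed
qed

lemma zspan_on: "((\<chi> i. 1), 0) \<in> span Zs"
proof -
  define d where "d = Cb - real k * V - Cu"
  have d: "d > 0" unfolding d_def using kcap by simp
  have "mkp ix (rampX (Cb - real k * V)) (\<lambda>_. 1) \<in> span Zs" "mkp ix (rampX Cu) (\<lambda>_. 1) \<in> span Zs"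
    using z3r[of "Cb - real k * V"] z3r[of Cu] kcap by (auto intro: span_base)
  then have "mkp ix (rampX (Cb - real k * V)) (\<lambda>_. 1) - mkp ix (rampX Cu) (\<lambda>_. 1) \<in> span Zs"
    by (simp add: span_diff)
  moreover have "mkp ix (rampX (Cb - real k * V)) (\<lambda>_. 1) - mkp ix (rampX Cu) (\<lambda>_. 1) = (d *\<^sub>R (\<chi> i. 1), 0)"
    by (rule mkp_diff_c[OF _ ix]) (auto simp: rampX_def d_def)
  ultimately have "d *\<^sub>R ((\<chi> i. 1), 0) \<in> span Zs" by simp
  then have "(1 / d) *\<^sub>R (d *\<^sub>R ((\<chi> i. 1), 0)) \<in> span Zs" by (rule span_scale)
  then show ?thesis using d by simp
qed

theorem fam1:
  "valid_facet (convex hull (UCP ix L l Cb Cu V Vb)) (\<lambda>p. xc ix p t - xc ix p (t - k))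
     (\<lambda>p. rhs1 Cu V Vb k m S t (yc ix p))"
proof (rule vf_crit[of _ _ _ "mkp ix (\<lambda>_. Cu) (\<lambda>_. 1)"])
  show "linear (\<lambda>p. xc ix p t - xc ix p (t - k) - rhs1 Cu V Vb k m S t (yc ix p))" by (rule lin_rhs1)
  show "0 \<in> UCP ix L l Cb Cu V Vb" by (rule zero_in)
  show "\<forall>p\<in>UCP ix L l Cb Cu V Vb. xc ix p t - xc ix p (t - k) \<le> rhs1 Cu V Vb k m S t (yc ix p)"
  proof
    fix p assume "p \<in> UCP ix L l Cb Cu V Vb"
    then have "ucpc CARD('n) L l Cb Cu V Vb (xc ix p) (yc ix p)" by (rule UCP_ucpc)
    then have "ucb CARD('n) L l Cb Cu V Vb (xc ix p) (yc ix p)" by (rule ucb.intro)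
    then show "xc ix p t - xc ix p (t - k) \<le> rhs1 Cu V Vb k m S t (yc ix p)"
      by (rule ucb.valid1) (use Cu V Vb1 Vb2 k m S t1 t2 in auto)
  qed
  have pin: "mkp ix (\<lambda>_. Cu) (\<lambda>_. 1) \<in> UCP ix L l Cb Cu V Vb"
    by (rule mkp_UCP[OF ix], rule ones_feas) (use Cb V in auto)
  then show "mkp ix (\<lambda>_. Cu) (\<lambda>_. 1) \<in> UCP ix L l Cb Cu V Vb" .
  have "rhs1 Cu V Vb k m S t (yc ix (mkp ix (\<lambda>_. Cu) (\<lambda>_. 1))) = rhs1 Cu V Vb k m S t (\<lambda>_. 1)"
    by (rule rhs1_cong) (use mkp_yc[OF ix] in auto)
  moreover have "xc ix (mkp ix (\<lambda>_. Cu) (\<lambda>_. 1)) t - xc ix (mkp ix (\<lambda>_. Cu) (\<lambda>_. 1)) (t - k) = 0"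
    using mkp_xc[OF ix] rng by simp
  moreover have "real k * V > 0" using k V by simp
  ultimately show "xc ix (mkp ix (\<lambda>_. Cu) (\<lambda>_. 1)) t - xc ix (mkp ix (\<lambda>_. Cu) (\<lambda>_. 1)) (t - k)
      \<noteq> rhs1 Cu V Vb k m S t (yc ix (mkp ix (\<lambda>_. Cu) (\<lambda>_. 1)))" using rhs1_ones k V by simp
  fix v
  assume v: "xc ix v t - xc ix v (t - k) - rhs1 Cu V Vb k m S t (yc ix v) = 0"
  have tk: "t \<in> {1..CARD('n)}" "t - k \<in> {1..CARD('n)}" using rng by auto
  show "v \<in> span {p \<in> UCP ix L l Cb Cu V Vb. xc ix p t - xc ix p (t - k) = rhs1 Cu V Vb k m S t (yc ix p)}"
    unfolding Zs_def[symmetric]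
  proof (rule span_crit[where g = "\<lambda>p. xc ix p t - xc ix p (t - k) - rhs1 Cu V Vb k m S t (yc ix p)"
        and a = "ix t" and b = "ix (t - k)"])
    show "linear (\<lambda>p. xc ix p t - xc ix p (t - k) - rhs1 Cu V Vb k m S t (yc ix p))" by (rule lin_rhs1)
    show "\<forall>p\<in>Zs. xc ix p t - xc ix p (t - k) - rhs1 Cu V Vb k m S t (yc ix p) = 0" unfolding Zs_def by simp
    show "ix t \<noteq> ix (t - k)" using ix_inj[OF tk] rng by auto
    show "\<forall>x. xc ix (x, 0) t - xc ix (x, 0) (t - k) - rhs1 Cu V Vb k m S t (yc ix (x, 0)) = x $ ix t - x $ ix (t - k)"
      by (simp add: xc_def yc_def rhs1_def)
    show "\<forall>i. i \<noteq> ix t \<and> i \<noteq> ix (t - k) \<longrightarrow> (axis i 1, 0) \<in> span Zs" using zspan_ax by auto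
    show "((\<chi> i. 1), 0) \<in> span Zs" by (rule zspan_on)
    show "\<forall>i. \<exists>r\<in>span Zs. snd r = axis i 1" by (rule yspan[OF zspan_pv])
    show "xc ix v t - xc ix v (t - k) - rhs1 Cu V Vb k m S t (yc ix v) = 0" by (rule v)
  qed
qed

end


locale F2 = P ix L l k m Cb Cu V Vb S
  for ix :: "nat \<Rightarrow> 'n::finite" and L l k m :: nat and Cb Cu V Vb :: real and S :: "nat set" +
  fixes t :: nat
  assumes t1: "m + 2 \<le> t" and t2: "t + k \<le> CARD('n)"
begin

definition "Zs = {p \<in> UCP ix L l Cb Cu V Vb. xc ix p t - xc ix p (t+k) = rhs2 Cu V Vb k m S t (yc ix p)}"

lemma rng: "1 \<le> t - m - 1" "t + k \<le> CARD('n)" "t < t + k" "1 \<le> t" "2 \<le> t" "t \<le> CARD('n)" using t1 t2 k by auto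

lemma rhs2_cong:
  assumes "\<forall>j\<in>{1..CARD('n)}. y j = y' j"
  shows "rhs2 Cu V Vb k m S t y = rhs2 Cu V Vb k m S t y'"
proof -
  have a: "y j = y' j" if "1 \<le> j" "j \<le> CARD('n)" for j using assms that by auto
  have s1: "(\<Sum>i=1..m. y (t - i)) = (\<Sum>i=1..m. y' (t - i))"
    by (rule sum.cong) (use a t1 t2 in auto)
  have s2: "(\<Sum>s\<in>S. (Cu + real (k - s) * V - Vb) * (y (t + s) - y (t + s + 1))) =
            (\<Sum>s\<in>S. (Cu + real (k - s) * V - Vb) * (y' (t + s) - y' (t + s + 1)))"
  proof (rule sum.cong)
    fix s assume "s \<in> S"
    then have "1 \<le> t + s" "t + s + 1 \<le> CARD('n)" using Sk[of s] t1 t2 k by auto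
    then show "(Cu + real (k - s) * V - Vb) * (y (t + s) - y (t + s + 1)) =
            (Cu + real (k - s) * V - Vb) * (y' (t + s) - y' (t + s + 1))" using a by simp
  qed simp
  show ?thesis unfolding rhs2_def s1 s2 using a[of "t-m-1"] a[of t] a[of "t+k"] rng by simp
qed

lemma tight:
  assumes u: "ucpc CARD('n) L l Cb Cu V Vb X Y" and eq: "X t - X (t+k) = rhs2 Cu V Vb k m S t Y"
  shows "mkp ix X Y \<in> Zs"
  unfolding Zs_def
proof (rule tight_in[OF u, where AA = "\<lambda>x. x t - x (t+k)" and BB = "rhs2 Cu V Vb k m S t"])
  show "X t - X (t + k) = rhs2 Cu V Vb k m S t Y" by (rule eq)
  show "\<And>x x'. \<forall>j\<in>{1..CARD('n)}. x j = x' j \<Longrightarrow> x t - x (t + k) = x' t - x' (t + k)"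
    using rng by auto
  show "\<And>y y'. \<forall>j\<in>{1..CARD('n)}. y j = y' j \<Longrightarrow> rhs2 Cu V Vb k m S t y = rhs2 Cu V Vb k m S t y'"
    by (rule rhs2_cong)
qed auto

lemma realkm: "real (k - m) = real k - real m" using m k by auto

lemma w1:
  assumes b: "b + m + 2 \<le> t"
  shows "mkp ix (\<lambda>j. Cu * pv b j) (pv b) \<in> Zs"
proof (rule tight)
  show "ucpc CARD('n) L l Cb Cu V Vb (\<lambda>j. Cu * pv b j) (pv b)"
    by (rule pv_feas) (use Cb Vb1 V in \<open>auto simp: pv_def\<close>)
  have "\<forall>s\<in>S. pv b (t + s) - pv b (t + s + 1) = 0" using b by (auto simp: pv_def)
  then have "(\<Sum>s\<in>S. (Cu + real (k - s) * V - Vb) * (pv b (t + s) - pv b (t + s + 1))) = 0" by simp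
  moreover have "(\<Sum>i=1..m. pv b (t - i)) = (\<Sum>i=1..m. 0)" by (rule sum.cong) (use b in \<open>auto simp: pv_def\<close>)
  moreover have "pv b t = 0" "pv b (t - m - 1) = 0" "pv b (t + k) = 0" using b by (auto simp: pv_def)
  ultimately show "Cu * pv b t - Cu * pv b (t + k) = rhs2 Cu V Vb k m S t (pv b)"
    unfolding rhs2_def by simp
qed

lemma w2:
  assumes sg: "\<sigma> \<in> S"
  shows "mkp ix (\<lambda>j. if j \<le> t + \<sigma> then Vb + V * real (t + \<sigma> - max j t) else 0) (pv (t + \<sigma>)) \<in> Zs"
proof -
  define b where "b = t + \<sigma>"
  define X where "X = (\<lambda>j. if j \<le> b then Vb + V * real (b - max j t) else 0)"
  have sk: "\<sigma> \<le> k - 1" using Sk[OF sg] by auto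
  have bt: "b - t = \<sigma>" "b < t + k" "t \<le> b" unfolding b_def using sk k by auto
  have u: "ucpc CARD('n) L l Cb Cu V Vb X (pv b)"
  proof (rule pv_feas)
    show "\<forall>i\<in>{1..CARD('n)}. b < i \<longrightarrow> X i = 0" unfolding X_def by auto
    show "\<forall>i\<in>{1..CARD('n)}. i \<le> b \<longrightarrow> Cu \<le> X i \<and> X i \<le> Cb"
    proof (intro ballI impI)
      fix i assume "i \<le> b"
      moreover have "b - max i t \<le> \<sigma>" using bt by auto
      then have "V * real (b - max i t) \<le> real \<sigma> * V" using V by (simp add: mult.commute)
      moreover have "V * real (b - max i t) \<ge> 0" using V by simp
      ultimately show "Cu \<le> X i \<and> X i \<le> Cb" unfolding X_def using bigm[OF sk] Vb1 by auto
    qed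
    show "\<forall>i\<in>{2..CARD('n)}. i \<le> b \<longrightarrow> \<bar>X i - X (i - 1)\<bar> \<le> V"
    proof (intro ballI impI)
      fix i assume i: "i \<in> {2..CARD('n)}" "i \<le> b"
      have "real (b - max (i-1) t) - real (b - max i t) \<ge> 0" "real (b - max (i-1) t) - real (b - max i t) \<le> 1"
        using i by auto
      moreover have "X (i-1) - X i = V * (real (b - max (i-1) t) - real (b - max i t))"
        unfolding X_def using i by (simp add: algebra_simps)
      ultimately have "0 \<le> X (i-1) - X i" "X (i-1) - X i \<le> V" using V
        by (auto simp: mult_le_cancel_left1)
      then show "\<bar>X i - X (i - 1)\<bar> \<le> V" by (simp add: abs_le_iff)
    qed
    show "b + 1 \<le> CARD('n) \<longrightarrow> 1 \<le> b \<longrightarrow> X b \<le> Vb" unfolding X_def using bt by simp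
  qed
  have Xt: "X t = Vb + real \<sigma> * V" unfolding X_def using bt by (simp add: mult.commute)
  have Xk: "X (t + k) = 0" unfolding X_def using bt by simp
  have d: "pv b (t + s) - pv b (t + s + 1) = (if s = \<sigma> then 1 else 0)" if "s \<in> S" for s
    unfolding pv_def b_def by auto
  have "(\<Sum>s\<in>S. (Cu + real (k - s) * V - Vb) * (pv b (t + s) - pv b (t + s + 1)))
      = (\<Sum>s\<in>S. if s = \<sigma> then Cu + real (k - s) * V - Vb else 0)"
    by (rule sum.cong) (use d in auto)
  also have "\<dots> = Cu + real (k - \<sigma>) * V - Vb" using finS sg by simp
  finally have sS: "(\<Sum>s\<in>S. (Cu + real (k - s) * V - Vb) * (pv b (t + s) - pv b (t + s + 1))) = Cu + real (k - \<sigma>) * V - Vb" .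
  have "(\<Sum>i=1..m. pv b (t - i)) = (\<Sum>i=1..m. 1)" by (rule sum.cong) (use bt in \<open>auto simp: pv_def\<close>)
  then have sm: "(\<Sum>i=1..m. pv b (t - i)) = real m" by simp
  have v: "pv b t = 1" "pv b (t - m - 1) = 1" "pv b (t + k) = 0" using bt by (auto simp: pv_def)
  have "real (k - \<sigma>) = real k - real \<sigma>" using sk k by auto
  then have e: "X t - X (t + k) = rhs2 Cu V Vb k m S t (pv b)"
    unfolding rhs2_def sS sm v Xt Xk using realkm by (simp add: algebra_simps)
  have "mkp ix X (pv b) \<in> Zs" by (rule tight[OF u e])
  then show ?thesis unfolding X_def b_def .
qed

lemma rhs2_ones: "rhs2 Cu V Vb k m S t (\<lambda>_. 1) = real k * V"
  unfolding rhs2_def using realkm by (simp add: algebra_simps)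

lemma w3:
  assumes "\<forall>i\<in>{1..CARD('n)}. Cu \<le> X i \<and> X i \<le> Cb" "\<forall>i\<in>{2..CARD('n)}. \<bar>X i - X (i-1)\<bar> \<le> V"
    and "X t - X (t+k) = real k * V"
  shows "mkp ix X (\<lambda>_. 1) \<in> Zs"
  by (rule tight) (use ones_feas[OF assms(1,2)] assms(3) rhs2_ones in auto)

definition cl2 :: "nat \<Rightarrow> nat" where "cl2 j = t + k - min (max j t) (t+k)"

lemma cl2_le: "cl2 j \<le> k" unfolding cl2_def by auto
lemma cl2_step: "cl2 i \<le> cl2 (i-1)" "cl2 (i-1) \<le> cl2 i + 1" unfolding cl2_def by (auto simp: min_def max_def)
lemma cl2_t: "cl2 t = k" "cl2 (t+k) = 0" unfolding cl2_def by auto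
lemma cl2_le_t: "j \<le> t \<Longrightarrow> cl2 j = k" unfolding cl2_def by auto

definition rampX :: "real \<Rightarrow> nat \<Rightarrow> real" where "rampX c j = c + V * real (cl2 j)"

lemma ramp_props:
  assumes c: "Cu \<le> c" "c + real k * V \<le> Cb"
  shows "\<forall>i\<in>{1..CARD('n)}. Cu \<le> rampX c i \<and> rampX c i \<le> Cb"
    "\<forall>i\<in>{2..CARD('n)}. \<bar>rampX c i - rampX c (i-1)\<bar> \<le> V"
    "rampX c t - rampX c (t+k) = real k * V"
proof -
  show "\<forall>i\<in>{1..CARD('n)}. Cu \<le> rampX c i \<and> rampX c i \<le> Cb"
  proof
    fix i
    have "V * real (cl2 i) \<le> V * real k" using cl2_le[of i] V by simp
    moreover have "V * real (cl2 i) \<ge> 0" using V by simp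
    ultimately show "Cu \<le> rampX c i \<and> rampX c i \<le> Cb" unfolding rampX_def using c by (simp add: mult.commute)
  qed
  show "\<forall>i\<in>{2..CARD('n)}. \<bar>rampX c i - rampX c (i-1)\<bar> \<le> V"
  proof
    fix i
    have "real (cl2 (i-1)) - real (cl2 i) \<ge> 0" "real (cl2 (i-1)) - real (cl2 i) \<le> 1"
      using cl2_step[of i] by auto
    moreover have "rampX c (i-1) - rampX c i = V * (real (cl2 (i-1)) - real (cl2 i))"
      unfolding rampX_def by (simp add: algebra_simps)
    ultimately have "0 \<le> rampX c (i-1) - rampX c i" "rampX c (i-1) - rampX c i \<le> V" using V
      by (auto simp: mult_le_cancel_left1)
    then show "\<bar>rampX c i - rampX c (i-1)\<bar> \<le> V" by (simp add: abs_le_iff)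
  qed
  show "rampX c t - rampX c (t+k) = real k * V" unfolding rampX_def using cl2_t by simp
qed

lemma w3r: "Cu \<le> c \<Longrightarrow> c + real k * V \<le> Cb \<Longrightarrow> mkp ix (rampX c) (\<lambda>_. 1) \<in> Zs"
  using w3 ramp_props by blast

definition eps :: real where "eps = min V (Cb - Cu - real k * V)"

lemma eps: "eps > 0" "eps \<le> V" "Cu + real k * V + eps \<le> Cb"
  unfolding eps_def using V kcap by auto

lemma w7:
  assumes j0: "j0 < t"
  shows "mkp ix ((rampX Cu)(j0 := Cu + real k * V + eps)) (\<lambda>_. 1) \<in> Zs"
proof (rule w3)
  let ?X = "(rampX Cu)(j0 := Cu + real k * V + eps)"
  have base: "\<forall>i\<in>{1..CARD('n)}. Cu \<le> rampX Cu i \<and> rampX Cu i \<le> Cb"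
    "\<forall>i\<in>{2..CARD('n)}. \<bar>rampX Cu i - rampX Cu (i-1)\<bar> \<le> V"
    "rampX Cu t - rampX Cu (t+k) = real k * V"
    using ramp_props[of Cu] kcap by auto
  have big: "rampX Cu i = Cu + real k * V" if "i \<le> t" for i
    unfolding rampX_def using cl2_le_t[OF that] by (simp add: mult.commute)
  show "\<forall>i\<in>{1..CARD('n)}. Cu \<le> ?X i \<and> ?X i \<le> Cb"
    using base(1) eps V k by (auto simp: mult_nonneg_nonneg)
  show "\<forall>i\<in>{2..CARD('n)}. \<bar>?X i - ?X (i-1)\<bar> \<le> V"
  proof
    fix i assume i: "i \<in> {2..CARD('n)}"
    show "\<bar>?X i - ?X (i-1)\<bar> \<le> V"
    proof (cases "i = j0")
      case True
      then have "?X (i-1) = Cu + real k * V" using big[of "i-1"] j0 i by auto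
      then show ?thesis using True eps by auto
    next
      case False
      show ?thesis
      proof (cases "i - 1 = j0")
        case True
        then have "?X i = Cu + real k * V" using big[of i] j0 i False by auto
        then show ?thesis using True eps False by auto
      next
        case False2: False
        then show ?thesis using False base(2) i by auto
      qed
    qed
  qed
  show "?X t - ?X (t+k) = real k * V" using base(3) j0 rng by auto
qed

lemma w4:
  assumes a: "t < a" and na: "\<forall>s\<in>S. a \<noteq> t + s + 1"
  shows "mkp ix (\<lambda>j. Cu * sv a j) (sv a) \<in> Zs"
proof (rule tight)
  show "ucpc CARD('n) L l Cb Cu V Vb (\<lambda>j. Cu * sv a j) (sv a)"
    by (rule sv_feas) (use Cb Vb1 V in \<open>auto simp: sv_def\<close>)
  have "\<forall>s\<in>S. sv a (t + s) - sv a (t + s + 1) = 0" using na by (auto simp: sv_def)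
  then have "(\<Sum>s\<in>S. (Cu + real (k - s) * V - Vb) * (sv a (t + s) - sv a (t + s + 1))) = 0" by simp
  moreover have "(\<Sum>i=1..m. sv a (t - i)) = (\<Sum>i=1..m. 0)" by (rule sum.cong) (use a in \<open>auto simp: sv_def\<close>)
  moreover have "sv a t = 0" "sv a (t - m - 1) = 0" using a by (auto simp: sv_def)
  ultimately show "Cu * sv a t - Cu * sv a (t + k) = rhs2 Cu V Vb k m S t (sv a)"
    unfolding rhs2_def by simp
qed

lemma w5:
  assumes a: "t - m \<le> a" "a \<le> t"
  shows "mkp ix (\<lambda>j. if a \<le> j then max Cu (Vb + real (t - a) * V - \<bar>real t - real j\<bar> * V) else 0) (sv a) \<in> Zs"
proof -
  define X where "X = (\<lambda>j. if a \<le> j then max Cu (Vb + real (t - a) * V - \<bar>real t - real j\<bar> * V) else 0)"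
  have tam: "t - a \<le> k - 1" using a m by auto
  have up: "Vb + real (t - a) * V < Cb" using bigm[OF tam] .
  have u: "ucpc CARD('n) L l Cb Cu V Vb X (sv a)"
  proof (rule sv_feas)
    show "\<forall>i\<in>{1..CARD('n)}. i < a \<longrightarrow> X i = 0" unfolding X_def by auto
    show "\<forall>i\<in>{1..CARD('n)}. a \<le> i \<longrightarrow> Cu \<le> X i \<and> X i \<le> Cb"
    proof (intro ballI impI)
      fix i assume "a \<le> i"
      moreover have "\<bar>real t - real i\<bar> * V \<ge> 0" using V by simp
      then have "Vb + real (t - a) * V - \<bar>real t - real i\<bar> * V \<le> Cb" using up by linarith
      ultimately show "Cu \<le> X i \<and> X i \<le> Cb" unfolding X_def using Cb by auto
    qed
    show "\<forall>i\<in>{2..CARD('n)}. a < i \<longrightarrow> \<bar>X i - X (i - 1)\<bar> \<le> V"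
    proof (intro ballI impI)
      fix i assume i: "i \<in> {2..CARD('n)}" "a < i"
      define u where "u = \<bar>real t - real i\<bar>"
      define w where "w = \<bar>real t - real (i-1)\<bar>"
      have "\<bar>u - w\<bar> \<le> 1" using i unfolding u_def w_def by auto
      then have "\<bar>u - w\<bar> * V \<le> 1 * V" using V by (intro mult_right_mono) auto
      moreover have "\<bar>u * V - w * V\<bar> = \<bar>u - w\<bar> * V"
        using V by (simp add: abs_mult left_diff_distrib[symmetric])
      ultimately have h: "\<bar>(Vb + real (t - a) * V - u * V) - (Vb + real (t - a) * V - w * V)\<bar> \<le> V"
        by simp
      have "X i - X (i - 1) = max Cu (Vb + real (t - a) * V - u * V) - max Cu (Vb + real (t - a) * V - w * V)"
        unfolding X_def u_def w_def using i by auto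
      then show "\<bar>X i - X (i - 1)\<bar> \<le> V"
        using maxdiff[of Cu "Vb + real (t - a) * V - u * V" "Vb + real (t - a) * V - w * V"] h by linarith
    qed
    show "2 \<le> a \<longrightarrow> a \<le> CARD('n) \<longrightarrow> X a \<le> Vb"
    proof -
      have "\<bar>real t - real a\<bar> = real (t - a)" using a by auto
      then show ?thesis unfolding X_def using Vb1 by auto
    qed
  qed
  have Xt: "X t = Vb + real (t - a) * V"
  proof -
    have "real (t - a) * V \<ge> 0" using V by simp
    then have "Vb + real (t - a) * V \<ge> Cu" using Vb1 by linarith
    then show ?thesis unfolding X_def using a by auto
  qed
  have Xk: "X (t + k) = Cu"
  proof -
    have "\<bar>real t - real (t + k)\<bar> = real k" by auto
    moreover have "real (t - a) \<le> real (k - 1)" using tam by simp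
    moreover have "real (k - 1) = real k - 1" using k by simp
    ultimately have e1: "\<bar>real t - real (t + k)\<bar> * V = real k * V" and e0: "real (t - a) * V \<le> (real k - 1) * V"
      using V by (auto intro: mult_right_mono)
    have e2: "(real k - 1) * V = real k * V - V" by (simp add: algebra_simps)
    have "Vb + real (t - a) * V - \<bar>real t - real (t + k)\<bar> * V \<le> Cu"
      using Vb2 e0 e1 e2 by linarith
    then show ?thesis unfolding X_def using a by auto
  qed
  have "(\<Sum>i=1..m. sv a (t - i)) = (\<Sum>i=1..m. if i \<le> t - a then 1 else 0)"
    by (rule sum.cong) (use a t1 in \<open>auto simp: sv_def\<close>)
  also have "\<dots> = real (t - a)" using a by (intro cnt) auto
  finally have sm: "(\<Sum>i=1..m. sv a (t - i)) = real (t - a)" .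
  have "\<forall>s\<in>S. sv a (t + s) - sv a (t + s + 1) = 0" using a by (auto simp: sv_def)
  then have sS: "(\<Sum>s\<in>S. (Cu + real (k - s) * V - Vb) * (sv a (t + s) - sv a (t + s + 1))) = 0" by simp
  have "sv a (t - m - 1) = 0" "sv a t = 1" "sv a (t + k) = 1" using a t1 by (auto simp: sv_def)
  then have e: "X t - X (t + k) = rhs2 Cu V Vb k m S t (sv a)"
    unfolding rhs2_def sm sS Xt Xk by simp
  have "mkp ix X (sv a) \<in> Zs" by (rule tight[OF u e])
  then show ?thesis unfolding X_def .
qed

definition X6 :: "nat \<Rightarrow> real \<Rightarrow> nat \<Rightarrow> real" where
  "X6 j0 w j = (if t \<le> j then (if j = t + k then Cu else if j = j0 then w else Vb) else 0)"

lemma w6: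
  assumes w: "Cu \<le> w" "w \<le> Vb" and j0: "j0 \<noteq> t"
  shows "mkp ix (X6 j0 w) (sv t) \<in> Zs"
proof (rule tight)
  have rngX: "Cu \<le> X6 j0 w i \<and> X6 j0 w i \<le> Vb" if "t \<le> i" for i
    unfolding X6_def using that w Vb1 by auto
  show "ucpc CARD('n) L l Cb Cu V Vb (X6 j0 w) (sv t)"
  proof (rule sv_feas)
    show "\<forall>i\<in>{1..CARD('n)}. i < t \<longrightarrow> X6 j0 w i = 0" unfolding X6_def by auto
    show "\<forall>i\<in>{1..CARD('n)}. t \<le> i \<longrightarrow> Cu \<le> X6 j0 w i \<and> X6 j0 w i \<le> Cb"
      using rngX VbV V by fastforce
    show "\<forall>i\<in>{2..CARD('n)}. t < i \<longrightarrow> \<bar>X6 j0 w i - X6 j0 w (i - 1)\<bar> \<le> V"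
    proof (intro ballI impI)
      fix i assume "t < i"
      then have "Cu \<le> X6 j0 w i \<and> X6 j0 w i \<le> Vb" "Cu \<le> X6 j0 w (i-1) \<and> X6 j0 w (i-1) \<le> Vb"
        using rngX[of i] rngX[of "i-1"] by auto
      then show "\<bar>X6 j0 w i - X6 j0 w (i - 1)\<bar> \<le> V" using Vb2 by auto
    qed
    show "2 \<le> t \<longrightarrow> t \<le> CARD('n) \<longrightarrow> X6 j0 w t \<le> Vb" unfolding X6_def using j0 k by auto
  qed
  have "X6 j0 w t = Vb" "X6 j0 w (t + k) = Cu" unfolding X6_def using j0 k by auto
  moreover have "\<forall>s\<in>S. sv t (t + s) - sv t (t + s + 1) = 0" by (auto simp: sv_def)
  then have "(\<Sum>s\<in>S. (Cu + real (k - s) * V - Vb) * (sv t (t + s) - sv t (t + s + 1))) = 0" by simp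
  moreover have "(\<Sum>i=1..m. sv t (t - i)) = (\<Sum>i=1..m. 0)" by (rule sum.cong) (use t1 in \<open>auto simp: sv_def\<close>)
  moreover have "sv t t = 1" "sv t (t - m - 1) = 0" "sv t (t + k) = 1" using t1 by (auto simp: sv_def)
  ultimately show "X6 j0 w t - X6 j0 w (t + k) = rhs2 Cu V Vb k m S t (sv t)"
    unfolding rhs2_def by simp
qed


lemma zspan_pv: "\<forall>b\<in>{0..CARD('n)}. \<exists>q\<in>span Zs. snd q = pvec b"
proof
  fix b assume b: "b \<in> {0..CARD('n)}"
  have one: "mkp ix (rampX Cu) (\<lambda>_. 1) \<in> span Zs" using w3r[of Cu] kcap by (auto intro: span_base)
  show "\<exists>q\<in>span Zs. snd q = pvec b"
  proof (cases "b + m + 2 \<le> t")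
    case True
    then have "mkp ix (\<lambda>j. Cu * pv b j) (pv b) \<in> Zs" using w1 by auto
    then show ?thesis using snd_pv by (blast intro: span_base)
  next
    case False
    show ?thesis
    proof (cases "b < t")
      case True
      define q5 where "q5 = mkp ix (\<lambda>j. if b + 1 \<le> j then max Cu (Vb + real (t - (b+1)) * V - \<bar>real t - real j\<bar> * V) else 0) (sv (b+1))"
      have "q5 \<in> span Zs" unfolding q5_def using w5[of "b+1"] True False by (auto intro: span_base)
      then have "mkp ix (rampX Cu) (\<lambda>_. 1) - q5 \<in> span Zs" using one by (simp add: span_diff)
      moreover have "snd (mkp ix (rampX Cu) (\<lambda>_. 1) - q5) = pvec b"
        unfolding q5_def using snd_sv[of "b+1"] snd_one by simp
      ultimately show ?thesis by blast
    next
      case False2: False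
      show ?thesis
      proof (cases "\<exists>\<sigma>\<in>S. b = t + \<sigma>")
        case True
        then obtain \<sigma> where sg: "\<sigma> \<in> S" "b = t + \<sigma>" by blast
        then show ?thesis using w2[OF sg(1)] snd_pv by (blast intro: span_base)
      next
        case False
        then have "mkp ix (\<lambda>j. Cu * sv (b+1) j) (sv (b+1)) \<in> span Zs"
          using w4[of "b+1"] False2 by (auto intro: span_base)
        then have "mkp ix (rampX Cu) (\<lambda>_. 1) - mkp ix (\<lambda>j. Cu * sv (b+1) j) (sv (b+1)) \<in> span Zs"
          using one by (simp add: span_diff)
        moreover have "snd (mkp ix (rampX Cu) (\<lambda>_. 1) - mkp ix (\<lambda>j. Cu * sv (b+1) j) (sv (b+1))) = pvec b"
          using snd_sv[of "b+1"] snd_one by simp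
        ultimately show ?thesis by blast
      qed
    qed
  qed
qed

lemma zspan_ax:
  assumes i: "i \<noteq> ix t" "i \<noteq> ix (t + k)"
  shows "(axis i 1, 0) \<in> span Zs"
proof -
  define j where "j = inv_into {1..CARD('n)} ix i"
  have j: "j \<in> {1..CARD('n)}" unfolding j_def by (rule inv_rng)
  have ij: "ix j = i" unfolding j_def by (rule ix_inv)
  have jt: "j \<noteq> t" "j \<noteq> t + k" using i ij by auto
  show ?thesis
  proof (cases "t < j")
    case True
    define h where "h = (Cu + Vb) / 2"
    have h: "Cu \<le> h" "h \<le> Vb" "h - Vb \<noteq> 0" unfolding h_def using Vb1 by auto
    have "mkp ix (X6 j h) (sv t) \<in> span Zs" "mkp ix (X6 j Vb) (sv t) \<in> span Zs"
      using w6[of h j] w6[of Vb j] h jt Vb1 by (auto intro: span_base)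
    then have "mkp ix (X6 j h) (sv t) - mkp ix (X6 j Vb) (sv t) \<in> span Zs" by (simp add: span_diff)
    moreover have "mkp ix (X6 j h) (sv t) - mkp ix (X6 j Vb) (sv t) = ((X6 j h j - X6 j Vb j) *\<^sub>R axis (ix j) 1, 0)"
      by (rule mkp_diff_x[OF ix j]) (auto simp: X6_def)
    moreover have "X6 j h j - X6 j Vb j = h - Vb" unfolding X6_def using True jt by auto
    ultimately have "(h - Vb) *\<^sub>R (axis i 1, 0) \<in> span Zs" using ij by simp
    then have "(1 / (h - Vb)) *\<^sub>R ((h - Vb) *\<^sub>R (axis i 1, 0)) \<in> span Zs" by (rule span_scale)
    then show ?thesis using h(3) by simp
  next
    case False
    then have jt': "j < t" using jt by auto
    let ?X = "(rampX Cu)(j := Cu + real k * V + eps)"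
    have "mkp ix ?X (\<lambda>_. 1) \<in> span Zs" "mkp ix (rampX Cu) (\<lambda>_. 1) \<in> span Zs"
      using w7[of j] w3r[of Cu] jt' j kcap by (auto intro: span_base)
    then have "mkp ix ?X (\<lambda>_. 1) - mkp ix (rampX Cu) (\<lambda>_. 1) \<in> span Zs" by (simp add: span_diff)
    moreover have "mkp ix ?X (\<lambda>_. 1) - mkp ix (rampX Cu) (\<lambda>_. 1) = ((?X j - rampX Cu j) *\<^sub>R axis (ix j) 1, 0)"
      by (rule mkp_diff_x[OF ix j]) auto
    moreover have "rampX Cu j = Cu + real k * V"
      using cl2_le_t[of j] jt' unfolding rampX_def by (simp add: mult.commute)
    ultimately have "eps *\<^sub>R (axis i 1, 0) \<in> span Zs" using ij by simp
    then have "(1 / eps) *\<^sub>R (eps *\<^sub>R (axis i 1, 0)) \<in> span Zs" by (rule span_scale)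
    then show ?thesis using eps(1) by simp
  qed
qed

lemma zspan_on: "((\<chi> i. 1), 0) \<in> span Zs"
proof -
  define d where "d = Cb - real k * V - Cu"
  have d: "d > 0" unfolding d_def using kcap by simp
  have "mkp ix (rampX (Cb - real k * V)) (\<lambda>_. 1) \<in> span Zs" "mkp ix (rampX Cu) (\<lambda>_. 1) \<in> span Zs"
    using w3r[of "Cb - real k * V"] w3r[of Cu] kcap by (auto intro: span_base)
  then have "mkp ix (rampX (Cb - real k * V)) (\<lambda>_. 1) - mkp ix (rampX Cu) (\<lambda>_. 1) \<in> span Zs"
    by (simp add: span_diff)
  moreover have "mkp ix (rampX (Cb - real k * V)) (\<lambda>_. 1) - mkp ix (rampX Cu) (\<lambda>_. 1) = (d *\<^sub>R (\<chi> i. 1), 0)"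
    by (rule mkp_diff_c[OF _ ix]) (auto simp: rampX_def d_def)
  ultimately have "d *\<^sub>R ((\<chi> i. 1), 0) \<in> span Zs" by simp
  then have "(1 / d) *\<^sub>R (d *\<^sub>R ((\<chi> i. 1), 0)) \<in> span Zs" by (rule span_scale)
  then show ?thesis using d by simp
qed

theorem fam2:
  "valid_facet (convex hull (UCP ix L l Cb Cu V Vb)) (\<lambda>p. xc ix p t - xc ix p (t + k))
     (\<lambda>p. rhs2 Cu V Vb k m S t (yc ix p))"
proof (rule vf_crit[of _ _ _ "mkp ix (\<lambda>_. Cu) (\<lambda>_. 1)"])
  show "linear (\<lambda>p. xc ix p t - xc ix p (t + k) - rhs2 Cu V Vb k m S t (yc ix p))" by (rule lin_rhs2)
  show "0 \<in> UCP ix L l Cb Cu V Vb" by (rule zero_in)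
  show "\<forall>p\<in>UCP ix L l Cb Cu V Vb. xc ix p t - xc ix p (t + k) \<le> rhs2 Cu V Vb k m S t (yc ix p)"
  proof
    fix p assume "p \<in> UCP ix L l Cb Cu V Vb"
    then have "ucpc CARD('n) L l Cb Cu V Vb (xc ix p) (yc ix p)" by (rule UCP_ucpc)
    then have "ucb CARD('n) L l Cb Cu V Vb (xc ix p) (yc ix p)" by (rule ucb.intro)
    then show "xc ix p t - xc ix p (t + k) \<le> rhs2 Cu V Vb k m S t (yc ix p)"
      by (rule ucb.valid2) (use Cu V Vb1 Vb2 k m S t1 t2 in auto)
  qed
  have pin: "mkp ix (\<lambda>_. Cu) (\<lambda>_. 1) \<in> UCP ix L l Cb Cu V Vb"
    by (rule mkp_UCP[OF ix], rule ones_feas) (use Cb V in auto)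
  then show "mkp ix (\<lambda>_. Cu) (\<lambda>_. 1) \<in> UCP ix L l Cb Cu V Vb" .
  have "rhs2 Cu V Vb k m S t (yc ix (mkp ix (\<lambda>_. Cu) (\<lambda>_. 1))) = rhs2 Cu V Vb k m S t (\<lambda>_. 1)"
    by (rule rhs2_cong) (use mkp_yc[OF ix] in auto)
  moreover have "xc ix (mkp ix (\<lambda>_. Cu) (\<lambda>_. 1)) t - xc ix (mkp ix (\<lambda>_. Cu) (\<lambda>_. 1)) (t + k) = 0"
    using mkp_xc[OF ix] rng by simp
  moreover have "real k * V > 0" using k V by simp
  ultimately show "xc ix (mkp ix (\<lambda>_. Cu) (\<lambda>_. 1)) t - xc ix (mkp ix (\<lambda>_. Cu) (\<lambda>_. 1)) (t + k)
      \<noteq> rhs2 Cu V Vb k m S t (yc ix (mkp ix (\<lambda>_. Cu) (\<lambda>_. 1)))" using rhs2_ones k V by simp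
  fix v
  assume v: "xc ix v t - xc ix v (t + k) - rhs2 Cu V Vb k m S t (yc ix v) = 0"
  have tk: "t \<in> {1..CARD('n)}" "t + k \<in> {1..CARD('n)}" using rng by auto
  show "v \<in> span {p \<in> UCP ix L l Cb Cu V Vb. xc ix p t - xc ix p (t + k) = rhs2 Cu V Vb k m S t (yc ix p)}"
    unfolding Zs_def[symmetric]
  proof (rule span_crit[where g = "\<lambda>p. xc ix p t - xc ix p (t + k) - rhs2 Cu V Vb k m S t (yc ix p)"
        and a = "ix t" and b = "ix (t + k)"])
    show "linear (\<lambda>p. xc ix p t - xc ix p (t + k) - rhs2 Cu V Vb k m S t (yc ix p))" by (rule lin_rhs2)
    show "\<forall>p\<in>Zs. xc ix p t - xc ix p (t + k) - rhs2 Cu V Vb k m S t (yc ix p) = 0" unfolding Zs_def by simp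
    show "ix t \<noteq> ix (t + k)" using ix_inj[OF tk] rng by auto
    show "\<forall>x. xc ix (x, 0) t - xc ix (x, 0) (t + k) - rhs2 Cu V Vb k m S t (yc ix (x, 0)) = x $ ix t - x $ ix (t + k)"
      by (simp add: xc_def yc_def rhs2_def)
    show "\<forall>i. i \<noteq> ix t \<and> i \<noteq> ix (t + k) \<longrightarrow> (axis i 1, 0) \<in> span Zs" using zspan_ax by auto
    show "((\<chi> i. 1), 0) \<in> span Zs" by (rule zspan_on)
    show "\<forall>i. \<exists>r\<in>span Zs. snd r = axis i 1" by (rule yspan[OF zspan_pv])
    show "xc ix v t - xc ix v (t + k) - rhs2 Cu V Vb k m S t (yc ix v) = 0" by (rule v)
  qed
qed

end

theorem proposition11:
  fixes ix :: "nat \<Rightarrow> 'n::finite"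
    and L l k m :: nat
    and Cb Cu V Vb :: real
    and S :: "nat set"
  defines "T \<equiv> CARD('n)"
  assumes ix: "bij_betw ix {1..T} UNIV"
    and L: "L \<ge> 1" and l: "l \<ge> 1"
    and Cb: "Cb > Cu" and Cu: "Cu > 0" and V: "V > 0" and VbV: "Vb + V \<le> Cb"
    and Vb1: "Cu < Vb" and Vb2: "Vb < Cu + V"
    and k: "1 \<le> k" "k \<le> T - 1" and kcap: "Cb - Cu - real k * V > 0"
    and m: "m \<le> k - 1"
    and S: "S \<subseteq> {s. s \<le> k - 1 \<and> int s \<le> int L - int m - 2}"
  shows
    "(\<forall>t. k + 1 \<le> t \<and> int t \<le> int T - int m - 1 \<longrightarrow>
        valid_facet (convex hull (UCP ix L l Cb Cu V Vb))
          (\<lambda>p. xc ix p t - xc ix p (t - k))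
          (\<lambda>p. (Cu + real (k - m) * V - Vb) * yc ix p (t + m + 1)
               + V * (\<Sum>i=1..m. yc ix p (t + i)) + Vb * yc ix p t - Cu * yc ix p (t - k)
               - (\<Sum>s\<in>S. (Cu + real (k - s) * V - Vb) * (yc ix p (t - s) - yc ix p (t - s - 1)))))
   \<and> (\<forall>t. m + 2 \<le> t \<and> t + k \<le> T \<longrightarrow>
        valid_facet (convex hull (UCP ix L l Cb Cu V Vb))
          (\<lambda>p. xc ix p t - xc ix p (t + k))
          (\<lambda>p. (Cu + real (k - m) * V - Vb) * yc ix p (t - m - 1)
               + V * (\<Sum>i=1..m. yc ix p (t - i)) + Vb * yc ix p t - Cu * yc ix p (t + k)
               - (\<Sum>s\<in>S. (Cu + real (k - s) * V - Vb) * (yc ix p (t + s) - yc ix p (t + s + 1)))))"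
  proof -
  have T: "T = CARD('n)" unfolding T_def ..
  interpret P ix L l k m Cb Cu V Vb S
    by (unfold_locales) (use ix L l Cb Cu V VbV Vb1 Vb2 k kcap m S T in auto)
  show ?thesis
  proof (intro conjI allI impI)
    fix t assume t: "k + 1 \<le> t \<and> int t \<le> int T - int m - 1"
    then have "t + m + 1 \<le> CARD('n)" using T by linarith
    then interpret F1 ix L l k m Cb Cu V Vb S t by (unfold_locales) (use t in auto)
    show "valid_facet (convex hull (UCP ix L l Cb Cu V Vb))
          (\<lambda>p. xc ix p t - xc ix p (t - k))
          (\<lambda>p. (Cu + real (k - m) * V - Vb) * yc ix p (t + m + 1)
               + V * (\<Sum>i=1..m. yc ix p (t + i)) + Vb * yc ix p t - Cu * yc ix p (t - k)
               - (\<Sum>s\<in>S. (Cu + real (k - s) * V - Vb) * (yc ix p (t - s) - yc ix p (t - s - 1))))"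
      using fam1 unfolding rhs1_def .
  next
    fix t assume t: "m + 2 \<le> t \<and> t + k \<le> T"
    then interpret F2 ix L l k m Cb Cu V Vb S t by (unfold_locales) (use t T in auto)
    show "valid_facet (convex hull (UCP ix L l Cb Cu V Vb))
          (\<lambda>p. xc ix p t - xc ix p (t + k))
          (\<lambda>p. (Cu + real (k - m) * V - Vb) * yc ix p (t - m - 1)
               + V * (\<Sum>i=1..m. yc ix p (t - i)) + Vb * yc ix p t - Cu * yc ix p (t + k)
               - (\<Sum>s\<in>S. (Cu + real (k - s) * V - Vb) * (yc ix p (t + s) - yc ix p (t + s + 1))))"
      using fam2 unfolding rhs2_def .
  qed
qed

end
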